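(* The $(1+1)$-elitist unary unbiased black-box complexity of the $\mathrm{DLB}$ problem is $\Omega(n^3)$; that is, there is a constant $c>0$ such that for all (sufficiently large) even $n$, every $(1+1)$-elitist unary unbiased black-box algorithm has expected runtime at least $c n^3$ on $\mathrm{DLB}:\{0,1\}^n\to\mathbb{R}$.
   Context: Let $n$ be an even positive integer. For $x\in\{0,1\}^n$ consider the blocks $(x_{2\ell+1},x_{2\ell+2})$, $\ell=0,\dots,\frac n2-1$. If $x\neq(1,\dots,1)$, let $m$ be the smallest $\ell$ with $x_{2\ell+1}\neq 1$ or $x_{2\ell+2}\neq 1$, and define $\mathrm{DLB}(x)=2m+1$ if $x_{2m+1}+x_{2m+2}=0$ and $\mathrm{DLB}(x)=2m$ if $x_{2m+1}+x_{2m+2}=1$; set $\mathrm{DLB}(1,\dots,1)=n$. The $\mathrm{DLB}$ problem is to maximize $\mathrm{DLB}$. A unary unbiased variation operator $V$ assigns to each $x\in\{0,1\}^n$ a probability distribution $V(x)$ on $\{0,1\}^n$ such that for all $x,y,z\in\{0,1\}^n$, $\Pr[y=V(x)]=\Pr[y\oplus z=V(x\oplus z)]$, and for all permutations $\sigma$ of $[1..n]$, $\Pr[y=V(x)]=\Pr[\sigma(y)=V(\sigma(x))]$, where $\sigma(x)=(x_{\sigma(1)},\dots,x_{\sigma(n)})$. A $(1+1)$-elitist unary unbiased black-box algorithm starts with a search point $x$ chosen uniformly at random from $\{0,1\}^n$; in each iteration it chooses a unary unbiased variation operator $V$ (this choice may depend only on the fitness values of the search points generated so far), samples $q\sim V(x)$,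 evaluates it, and replaces $x$ by a best individual among $\{x,q\}$ (ties broken arbitrarily). Every generated search point is evaluated immediately. The runtime is the number of fitness evaluations until (and including) the first evaluation of an optimal solution. The $(1+1)$-elitist black-box complexity of $\mathrm{DLB}$ is the infimum, over all such algorithms, of the expected runtime on $\mathrm{DLB}$. *)

theory Defs
  imports "HOL-Probability.Probability"
begin

text \<open>Bit strings of length n are represented as bool lists of length n
  (position i of the paper, 1-based, is list index i-1).\<close>

definition bitstrings :: "nat \<Rightarrow> bool list set" where
  "bitstrings n = {xs. length xs = n}"

definition xor_bits :: "bool list \<Rightarrow> bool list \<Rightarrow> bool list" where
  "xor_bits x z = map2 (\<noteq>) x z"

definition perm_bits :: "nat \<Rightarrow> (nat \<Rightarrow> nat) \<Rightarrow> bool list \<Rightarrow> bool list" where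
  "perm_bits n \<sigma> x = map (\<lambda>i. x ! \<sigma> i) [0..<n]"

definition dlb :: "nat \<Rightarrow> bool list \<Rightarrow> real" where
  "dlb n x =
    (if \<forall>l < n div 2. x ! (2*l) \<and> x ! (2*l+1) then real n
     else let m = (LEAST l. \<not> (x ! (2*l) \<and> x ! (2*l+1))) in
       if \<not> x ! (2*m) \<and> \<not> x ! (2*m+1) then real (2*m+1) else real (2*m))"

definition unary_unbiased :: "nat \<Rightarrow> (bool list \<Rightarrow> bool list pmf) \<Rightarrow> bool" where
  "unary_unbiased n V \<longleftrightarrow>
     (\<forall>x \<in> bitstrings n. set_pmf (V x) \<subseteq> bitstrings n) \<and>
     (\<forall>x \<in> bitstrings n. \<forall>y \<in> bitstrings n. \<forall>z \<in> bitstrings n.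
        pmf (V x) y = pmf (V (xor_bits x z)) (xor_bits y z)) \<and>
     (\<forall>x \<in> bitstrings n. \<forall>y \<in> bitstrings n. \<forall>\<sigma>. \<sigma> permutes {0..<n} \<longrightarrow>
        pmf (V x) y = pmf (V (perm_bits n \<sigma> x)) (perm_bits n \<sigma> y))"

definition is_opt :: "nat \<Rightarrow> (bool list \<Rightarrow> real) \<Rightarrow> bool list \<Rightarrow> bool" where
  "is_opt n f q \<longleftrightarrow> (\<forall>y \<in> bitstrings n. f y \<le> f q)"

text \<open>State: (fitness history, current search point, optimum already evaluated).
  The algorithm is given by Op (operator chosen from the fitness history) and
  Tie (possibly randomised tie-breaking rule: True = accept offspring), both
  depending only on the fitness values seen so far.\<close>
type_synonym bb_state = "real list \<times> bool list \<times> bool"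

definition bb_init :: "nat \<Rightarrow> (bool list \<Rightarrow> real) \<Rightarrow> bb_state pmf" where
  "bb_init n f = map_pmf (\<lambda>x. ([f x], x, is_opt n f x)) (pmf_of_set (bitstrings n))"

definition bb_step :: "nat \<Rightarrow> (bool list \<Rightarrow> real) \<Rightarrow>
    (real list \<Rightarrow> bool list \<Rightarrow> bool list pmf) \<Rightarrow> (real list \<Rightarrow> bool pmf) \<Rightarrow>
    bb_state \<Rightarrow> bb_state pmf" where
  "bb_step n f Op Tie s = (case s of (h, x, d) \<Rightarrow>
     if d then return_pmf s else
     bind_pmf (Op h x) (\<lambda>q.
       let h' = h @ [f q] in
       bind_pmf (if f q > f x then return_pmf True
                 else if f q < f x then return_pmf False else Tie h')
         (\<lambda>keep. return_pmf (h', if keep then q else x, is_opt n f q))))"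

primrec bb_state :: "nat \<Rightarrow> (bool list \<Rightarrow> real) \<Rightarrow>
    (real list \<Rightarrow> bool list \<Rightarrow> bool list pmf) \<Rightarrow> (real list \<Rightarrow> bool pmf) \<Rightarrow>
    nat \<Rightarrow> bb_state pmf" where
  "bb_state n f Op Tie 0 = bb_init n f"
| "bb_state n f Op Tie (Suc t) = bind_pmf (bb_state n f Op Tie t) (bb_step n f Op Tie)"

text \<open>Expected runtime (number of evaluations, including the first optimal one):
  E[T] = sum_{k>=0} P(T > k) = 1 + sum_{t>=0} P(no optimum evaluated after t iterations).\<close>
definition expected_runtime :: "nat \<Rightarrow> (bool list \<Rightarrow> real) \<Rightarrow>
    (real list \<Rightarrow> bool list \<Rightarrow> bool list pmf) \<Rightarrow> (real list \<Rightarrow> bool pmf) \<Rightarrow> ennreal" where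
  "expected_runtime n f Op Tie =
     1 + (\<Sum>t. ennreal (measure_pmf.prob (bb_state n f Op Tie t) {s. \<not> snd (snd s)}))"

end

theory Submission
  imports Defs "HOL-Combinatorics.Transposition"
begin

definition okb :: "bool list \<Rightarrow> nat \<Rightarrow> bool" where
  "okb x l \<longleftrightarrow> x!(2*l) \<and> x!(2*l+1)"
definition trapb :: "bool list \<Rightarrow> nat \<Rightarrow> bool" where
  "trapb x l \<longleftrightarrow> \<not> x!(2*l) \<and> \<not> x!(2*l+1)"
definition crit :: "nat \<Rightarrow> bool list \<Rightarrow> nat" where
  "crit n x = (if \<forall>l<n div 2. okb x l then n div 2 else LEAST l. \<not> okb x l)"

lemma crit_props:
  "crit n x \<le> n div 2" "l < crit n x \<Longrightarrow> okb x l" "crit n x < n div 2 \<Longrightarrow> \<not> okb x (crit n x)"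
proof -
  show "crit n x \<le> n div 2"
    unfolding crit_def by (auto intro: Least_le[THEN order_trans] less_imp_le)
  show "l < crit n x \<Longrightarrow> okb x l"
    unfolding crit_def by (auto split: if_splits dest: not_less_Least)
  show "crit n x < n div 2 \<Longrightarrow> \<not> okb x (crit n x)"
    unfolding crit_def using LeastI[of "\<lambda>l. \<not> okb x l"] by (auto split: if_splits)
qed

lemma crit_eqI:
  assumes "c \<le> n div 2" "\<And>l. l < c \<Longrightarrow> okb x l" "c < n div 2 \<Longrightarrow> \<not> okb x c"
  shows "crit n x = c"
proof (cases "c = n div 2")
  case True thus ?thesis using assms unfolding crit_def by auto
next
  case False
  hence "c < n div 2" using assms by auto
  hence "\<not> okb x c" using assms by auto
  hence "(LEAST l. \<not> okb x l) = c" using assms(2)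
    by (intro Least_equality) (auto simp: not_less[symmetric])
  thus ?thesis unfolding crit_def using \<open>c < n div 2\<close> \<open>\<not> okb x c\<close> by auto
qed

lemma dlb_crit:
  "dlb n x = (if crit n x = n div 2 then real n else if trapb x (crit n x)
     then real (2 * crit n x + 1) else real (2 * crit n x))"
proof (cases "\<forall>l<n div 2. okb x l")
  case True
  thus ?thesis unfolding dlb_def crit_def okb_def by auto
next
  case False
  then obtain l where l: "l < n div 2" "\<not> okb x l" by auto
  have "(LEAST l. \<not> okb x l) \<le> l" using l by (auto intro: Least_le)
  hence "crit n x < n div 2" "crit n x = (LEAST l. \<not> okb x l)" using False l unfolding crit_def by auto
  thus ?thesis using False unfolding dlb_def okb_def trapb_def Let_def
    by (auto simp: okb_def)
qed

definition agree :: "nat \<Rightarrow> nat \<Rightarrow> bool list \<Rightarrow> bool list \<Rightarrow> bool" where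
  "agree n p x y \<longleftrightarrow> (\<forall>i<p. i < n \<longrightarrow> x!i = y!i)"

lemma agree_sym: "agree n p x y \<Longrightarrow> agree n p y x"
  unfolding agree_def by auto

lemma agree_block:
  assumes "even n" "agree n (2*c+2) x y" "l \<le> c" "l < n div 2"
  shows "okb x l = okb y l" "trapb x l = trapb y l"
proof -
  have "2*l < n" "2*l+1 < n" using assms(1,4) by auto
  moreover have "2*l < 2*c+2" "2*l+1 < 2*c+2" using assms(3) by auto
  ultimately have "x!(2*l) = y!(2*l)" "x!(2*l+1) = y!(2*l+1)" using assms(2) unfolding agree_def by auto
  thus "okb x l = okb y l" "trapb x l = trapb y l" unfolding okb_def trapb_def by auto
qed

lemma agree_crit:
  assumes "even n" "agree n (2*c+2) x y" "crit n x \<le> c"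
  shows "crit n y = crit n x" "dlb n y = dlb n x"
proof -
  have "crit n y = crit n x"
  proof (rule crit_eqI)
    show "crit n x \<le> n div 2" by (rule crit_props)
    fix l assume "l < crit n x"
    thus "okb y l" using crit_props(2)[of l n x] agree_block[OF assms(1,2), of l] assms(3) crit_props(1)[of n x]
      by auto
  next
    assume "crit n x < n div 2"
    thus "\<not> okb y (crit n x)" using crit_props(3)[of n x] agree_block[OF assms(1,2), of "crit n x"] assms(3)
      by auto
  qed
  moreover have "crit n x < n div 2 \<Longrightarrow> trapb y (crit n x) = trapb x (crit n x)"
    using agree_block[OF assms(1,2), of "crit n x"] assms(3) by auto
  ultimately show "crit n y = crit n x" "dlb n y = dlb n x"
    by (auto simp: dlb_crit[of n y] dlb_crit[of n x] dest: order.not_eq_order_implies_strict[OF _ crit_props(1)])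
qed

lemma agree_crit_gt:
  assumes "even n" "agree n (2*c+2) x y" "c < crit n x"
  shows "c < crit n y"
proof (rule ccontr)
  assume "\<not> c < crit n y"
  hence "crit n x = crit n y" using agree_crit[OF assms(1) agree_sym[OF assms(2)]] by auto
  thus False using assms \<open>\<not> c < crit n y\<close> by auto
qed

lemma dlb_bounds:
  assumes "even n"
  shows "crit n x < n div 2 \<Longrightarrow> real (2 * crit n x) \<le> dlb n x \<and> dlb n x \<le> real (2 * crit n x + 1)"
    "dlb n x \<le> real n"
  using assms crit_props(1)[of n x] by (auto simp: dlb_crit)

lemma dlb_less_of_crit:
  assumes "even n" "crit n x < crit n y"
  shows "dlb n x < dlb n y"
proof -
  have cx: "crit n x < n div 2" using assms crit_props(1)[of n y] by auto
  have "dlb n x \<le> real (2 * crit n x + 1)" using dlb_bounds[OF assms(1)] cx by auto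
  also have "\<dots> < real (2 * crit n y)" using assms by auto
  also have "real (2 * crit n y) \<le> dlb n y"
    using dlb_bounds[OF assms(1), of y] assms(1) by (cases "crit n y = n div 2") (auto simp: dlb_crit)
  finally show ?thesis .
qed

lemma crit_le_of_dlb:
  assumes "even n" "dlb n x \<le> dlb n y" shows "crit n x \<le> crit n y"
  using dlb_less_of_crit[OF assms(1), of y x] assms(2) by (auto simp: not_le[symmetric])

lemma crit_eq_of_dlb:
  assumes "even n" "dlb n x = dlb n y" shows "crit n x = crit n y"
  using crit_le_of_dlb[OF assms(1)] assms(2) by (metis order.refl le_antisym)

lemma dlb_eq_same_crit:
  assumes "crit n x = crit n y" "crit n x < n div 2 \<Longrightarrow> trapb x (crit n x) = trapb y (crit n x)"
  shows "dlb n x = dlb n y"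
  using assms by (auto simp: dlb_crit[of n x] dlb_crit[of n y] dest: order.not_eq_order_implies_strict[OF _ crit_props(1)])

lemma dlb_less_same_crit:
  assumes "even n" "crit n x = crit n y" "dlb n x < dlb n y"
  shows "crit n x < n div 2" "\<not> trapb x (crit n x)" "trapb y (crit n x)"
proof -
  show c: "crit n x < n div 2"
    using assms crit_props(1)[of n x] by (cases "crit n x = n div 2") (auto simp: dlb_crit[of n x] dlb_crit[of n y])
  show "\<not> trapb x (crit n x)" "trapb y (crit n x)"
    using assms c by (auto simp: dlb_crit[of n x] dlb_crit[of n y] split: if_splits)
qed

lemma crit_full_iff:
  assumes "even n" "length x = n"
  shows "crit n x = n div 2 \<longleftrightarrow> x = replicate n True"
proof
  assume "crit n x = n div 2"
  hence ok: "\<And>l. l < n div 2 \<Longrightarrow> okb x l" using crit_props(2) by metis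
  show "x = replicate n True"
  proof (rule nth_equalityI)
    fix i assume "i < length x"
    hence "i div 2 < n div 2" using assms by auto
    hence "okb x (i div 2)" by (rule ok)
    moreover have "i = 2*(i div 2) \<or> i = 2*(i div 2)+1" by auto
    ultimately show "x!i = replicate n True ! i" using \<open>i < length x\<close> assms unfolding okb_def
      by (metis nth_replicate)
  qed (use assms in auto)
next
  assume "x = replicate n True"
  thus "crit n x = n div 2"
    by (intro crit_eqI) (auto simp: okb_def assms)
qed

lemma is_opt_iff:
  assumes "even n" "length q = n"
  shows "is_opt n (dlb n) q \<longleftrightarrow> crit n q = n div 2"
proof
  assume "is_opt n (dlb n) q"
  hence "dlb n (replicate n True) \<le> dlb n q" unfolding is_opt_def bitstrings_def by auto
  moreover have "crit n (replicate n True) = n div 2" using crit_full_iff[OF assms(1)] by auto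
  ultimately show "crit n q = n div 2" using crit_le_of_dlb[OF assms(1)] crit_props(1)[of n q] by fastforce
next
  assume "crit n q = n div 2"
  hence "dlb n q = real n" by (simp add: dlb_crit)
  thus "is_opt n (dlb n) q" unfolding is_opt_def using dlb_bounds(2)[OF assms(1)] by auto
qed

subsection \<open>xor and permutations\<close>

lemma xor_len[simp]: "length (xor_bits x z) = min (length x) (length z)"
  unfolding xor_bits_def by simp

lemma xor_nth[simp]: "i < length x \<Longrightarrow> i < length z \<Longrightarrow> xor_bits x z ! i = (x!i \<noteq> z!i)"
  unfolding xor_bits_def by simp

lemma xor_xor: "length x = length z \<Longrightarrow> xor_bits (xor_bits x z) z = x"
  by (rule nth_equalityI) auto

lemma xor_bs: "x \<in> bitstrings n \<Longrightarrow> z \<in> bitstrings n \<Longrightarrow> xor_bits x z \<in> bitstrings n"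
  unfolding bitstrings_def by auto

lemma xor_zero_left: "length x = n \<Longrightarrow> xor_bits (replicate n False) x = x"
  by (rule nth_equalityI) auto

lemma xor_zero_right: "length x = n \<Longrightarrow> xor_bits x (replicate n False) = x"
  by (rule nth_equalityI) auto

lemma xor_swap: "length x = n \<Longrightarrow> length y = n \<Longrightarrow> length z = n \<Longrightarrow>
   xor_bits (xor_bits x y) z = xor_bits (xor_bits x z) y"
  by (rule nth_equalityI) auto

lemma pmf_map_inj_on_gen:
  assumes "inj_on f A" "set_pmf M \<subseteq> A" "y \<in> A"
  shows "pmf (map_pmf f M) (f y) = pmf M y"
proof (cases "y \<in> set_pmf M")
  case True
  thus ?thesis using pmf_map_inj[OF inj_on_subset[OF assms(1,2)]] by auto
next
  case False
  hence "f y \<notin> set_pmf (map_pmf f M)" using assms by (auto dest: inj_onD)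
  thus ?thesis using False by (simp add: set_pmf_eq)
qed

lemma pmf_map_outside:
  assumes "set_pmf M \<subseteq> A" "f ` A \<subseteq> B" "y \<notin> B"
  shows "pmf (map_pmf f M) y = 0"
proof -
  have "y \<notin> set_pmf (map_pmf f M)" using assms by auto
  thus ?thesis by (simp add: set_pmf_eq)
qed

lemma finite_bitstrings: "finite (bitstrings n)"
proof -
  have "bitstrings n = {xs. set xs \<subseteq> UNIV \<and> length xs = n}" unfolding bitstrings_def by auto
  thus ?thesis using finite_lists_length_eq[of "UNIV :: bool set" n] by auto
qed

lemma unb_supp: "unary_unbiased n V \<Longrightarrow> x \<in> bitstrings n \<Longrightarrow> set_pmf (V x) \<subseteq> bitstrings n"
  unfolding unary_unbiased_def by auto

lemma unb_xor:
  assumes V: "unary_unbiased n V" and x: "x \<in> bitstrings n" and z: "z \<in> bitstrings n"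
  shows "V (xor_bits x z) = map_pmf (\<lambda>y. xor_bits y z) (V x)"
proof (rule pmf_eqI)
  fix y'
  have inj: "inj_on (\<lambda>y. xor_bits y z) (bitstrings n)"
    by (rule inj_on_inverseI[where g="\<lambda>y. xor_bits y z"]) (use z in \<open>auto simp: bitstrings_def xor_xor\<close>)
  show "pmf (V (xor_bits x z)) y' = pmf (map_pmf (\<lambda>y. xor_bits y z) (V x)) y'"
  proof (cases "y' \<in> bitstrings n")
    case True
    let ?y = "xor_bits y' z"
    have yb: "?y \<in> bitstrings n" using True z by (rule xor_bs)
    have e: "xor_bits ?y z = y'" using True z by (auto simp: bitstrings_def xor_xor)
    have "pmf (map_pmf (\<lambda>y. xor_bits y z) (V x)) y' = pmf (V x) ?y"
      using pmf_map_inj_on_gen[OF inj unb_supp[OF V x] yb] e by simp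
    also have "\<dots> = pmf (V (xor_bits x z)) y'"
      using V x yb z e unfolding unary_unbiased_def by metis
    finally show ?thesis by simp
  next
    case False
    have "pmf (V (xor_bits x z)) y' = 0"
      using unb_supp[OF V xor_bs[OF x z]] False by (auto simp: set_pmf_eq)
    moreover have "pmf (map_pmf (\<lambda>y. xor_bits y z) (V x)) y' = 0"
      by (rule pmf_map_outside[OF unb_supp[OF V x], of _ "bitstrings n"]) (use False z xor_bs in auto)
    ultimately show ?thesis by simp
  qed
qed

lemma unb_from_zero:
  assumes V: "unary_unbiased n V" and x: "x \<in> bitstrings n"
  shows "V x = map_pmf (\<lambda>S. xor_bits S x) (V (replicate n False))"
  using unb_xor[OF V _ x, of "replicate n False"] x
  by (auto simp: bitstrings_def xor_zero_left)

lemma perm_len[simp]: "length (perm_bits n \<sigma> x) = n"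
  unfolding perm_bits_def by simp

lemma perm_nth[simp]: "i < n \<Longrightarrow> perm_bits n \<sigma> x ! i = x ! \<sigma> i"
  unfolding perm_bits_def by simp

lemma perm_inv:
  assumes "\<sigma> permutes {0..<n}" "length y = n"
  shows "perm_bits n (inv \<sigma>) (perm_bits n \<sigma> y) = y"
proof (rule nth_equalityI)
  fix i assume "i < length (perm_bits n (inv \<sigma>) (perm_bits n \<sigma> y))"
  hence i: "i < n" by simp
  have "inv \<sigma> i < n" using permutes_in_image[OF permutes_inv[OF assms(1)]] i by auto
  thus "perm_bits n (inv \<sigma>) (perm_bits n \<sigma> y) ! i = y ! i"
    using i permutes_inverses(1)[OF assms(1)] by simp
qed (use assms in auto)

lemma unb_perm:
  assumes V: "unary_unbiased n V" and \<sigma>: "\<sigma> permutes {0..<n}"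
  shows "map_pmf (perm_bits n \<sigma>) (V (replicate n False)) = V (replicate n False)"
proof (rule pmf_eqI)
  fix y'
  let ?R = "V (replicate n False)"
  have zb: "replicate n False \<in> bitstrings n" by (simp add: bitstrings_def)
  have pz: "perm_bits n \<sigma> (replicate n False) = replicate n False"
  proof (rule nth_equalityI)
    fix i assume "i < length (perm_bits n \<sigma> (replicate n False))"
    hence "i < n" by simp
    hence "\<sigma> i < n" using permutes_in_image[OF \<sigma>] by auto
    thus "perm_bits n \<sigma> (replicate n False) ! i = replicate n False ! i" using \<open>i < n\<close> by simp
  qed simp
  have inj: "inj_on (perm_bits n \<sigma>) (bitstrings n)"
    by (rule inj_on_inverseI[where g="perm_bits n (inv \<sigma>)"]) (use \<sigma> perm_inv in \<open>auto simp: bitstrings_def\<close>)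
  show "pmf (map_pmf (perm_bits n \<sigma>) ?R) y' = pmf ?R y'"
  proof (cases "y' \<in> bitstrings n")
    case True
    let ?y = "perm_bits n (inv \<sigma>) y'"
    have yb: "?y \<in> bitstrings n" by (simp add: bitstrings_def)
    have e: "perm_bits n \<sigma> ?y = y'"
      using perm_inv[OF permutes_inv[OF \<sigma>], of y'] True inv_inv_eq[OF permutes_bij[OF \<sigma>]]
      by (auto simp: bitstrings_def)
    have "pmf (map_pmf (perm_bits n \<sigma>) ?R) y' = pmf ?R ?y"
      using pmf_map_inj_on_gen[OF inj unb_supp[OF V zb] yb] e by simp
    also have "\<dots> = pmf ?R y'"
      using V zb yb \<sigma> e pz unfolding unary_unbiased_def by metis
    finally show ?thesis .
  next
    case False
    have "pmf ?R y' = 0" using unb_supp[OF V zb] False by (auto simp: set_pmf_eq)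
    moreover have "pmf (map_pmf (perm_bits n \<sigma>) ?R) y' = 0"
      by (rule pmf_map_outside[OF unb_supp[OF V zb], of _ "bitstrings n"]) (use False in \<open>auto simp: bitstrings_def\<close>)
    ultimately show ?thesis by simp
  qed
qed

subsection \<open>Probability bounds for one step\<close>

lemma bit_cases: "(i::nat) < 2*c+2 \<Longrightarrow> i div 2 \<le> c \<and> (i = 2*(i div 2) \<or> i = 2*(i div 2)+1)"
  by auto

lemma crit_gt_iff:
  assumes "even n" "length q = n" "c < n div 2"
  shows "c < crit n q \<longleftrightarrow> (\<forall>i<2*c+2. q!i)"
proof
  assume "c < crit n q"
  hence ok: "\<And>l. l \<le> c \<Longrightarrow> okb q l" using crit_props(2) by (metis le_less_trans)
  show "\<forall>i<2*c+2. q!i"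
  proof (intro allI impI)
    fix i assume "i < 2*c+2"
    from bit_cases[OF this] ok[of "i div 2"] show "q!i" unfolding okb_def by metis
  qed
next
  assume all: "\<forall>i<2*c+2. q!i"
  show "c < crit n q"
  proof (rule ccontr)
    assume "\<not> c < crit n q"
    hence "crit n q < n div 2" "crit n q \<le> c" using assms by auto
    hence "\<not> okb q (crit n q)" using crit_props(3) by auto
    moreover have "okb q (crit n q)" using all \<open>crit n q \<le> c\<close> unfolding okb_def by auto
    ultimately show False by simp
  qed
qed

lemma crit_trap_iff:
  assumes "even n" "length q = n" "c < n div 2"
  shows "(crit n q = c \<and> trapb q c) \<longleftrightarrow> ((\<forall>i<2*c. q!i) \<and> \<not> q!(2*c) \<and> \<not> q!(2*c+1))"
proof
  assume a: "crit n q = c \<and> trapb q c"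
  have "\<forall>i<2*c. q!i"
  proof (intro allI impI)
    fix i assume i: "i < 2*c"
    hence "okb q (i div 2)" using a crit_props(2)[of "i div 2" n q] by auto
    moreover have "i = 2*(i div 2) \<or> i = 2*(i div 2)+1" by auto
    ultimately show "q!i" unfolding okb_def by metis
  qed
  thus "(\<forall>i<2*c. q!i) \<and> \<not> q!(2*c) \<and> \<not> q!(2*c+1)" using a unfolding trapb_def by auto
next
  assume a: "(\<forall>i<2*c. q!i) \<and> \<not> q!(2*c) \<and> \<not> q!(2*c+1)"
  have "crit n q = c"
  proof (rule crit_eqI)
    fix l assume "l < c" thus "okb q l" using a unfolding okb_def by auto
  qed (use assms a in \<open>auto simp: okb_def\<close>)
  thus "crit n q = c \<and> trapb q c" using a unfolding trapb_def by auto
qed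

lemma measure_cong_supp:
  assumes "set_pmf M \<subseteq> C" "X \<inter> C = Y \<inter> C"
  shows "measure (measure_pmf M) X = measure (measure_pmf M) Y"
proof -
  have "measure (measure_pmf M) X = measure (measure_pmf M) (X \<inter> set_pmf M)" by (simp add: measure_Int_set_pmf)
  also have "X \<inter> set_pmf M = Y \<inter> set_pmf M" using assms by blast
  also have "measure (measure_pmf M) (Y \<inter> set_pmf M) = measure (measure_pmf M) Y" by (simp add: measure_Int_set_pmf)
  finally show ?thesis .
qed

lemma swap_prob:
  assumes n: "even n" and V: "unary_unbiased n V" and x: "x \<in> bitstrings n"
    and c: "crit n x = c" "c < n div 2" and mixed: "\<not> trapb x c"
  shows "measure (V x) {q. c < crit n q} = measure (V x) {q. crit n q = c \<and> trapb q c}"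
proof -
  let ?R = "V (replicate n False)"
  let ?\<sigma> = "Transposition.transpose (2*c) (2*c+1)"
  have lx: "length x = n" using x by (simp add: bitstrings_def)
  have c1: "2*c+1 < n" using c n by auto
  have \<sigma>: "?\<sigma> permutes {0..<n}" using c1 by (intro permutes_swap_id) auto
  have xpre: "\<forall>i<2*c. x!i"
  proof (intro allI impI)
    fix i assume i: "i < 2*c"
    hence "okb x (i div 2)" using c crit_props(2)[of "i div 2" n x] by auto
    moreover have "i = 2*(i div 2) \<or> i = 2*(i div 2)+1" by auto
    ultimately show "x!i" unfolding okb_def by metis
  qed
  have xmix: "x!(2*c+1) = (\<not> x!(2*c))"
    using mixed crit_props(3)[of n x] c unfolding okb_def trapb_def by auto
  have supp: "set_pmf ?R \<subseteq> bitstrings n" by (rule unb_supp[OF V]) (simp add: bitstrings_def)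
  have "measure (V x) {q. c < crit n q} = measure ?R {S. c < crit n (xor_bits S x)}"
    by (subst unb_from_zero[OF V x]) simp
  also have "\<dots> = measure (map_pmf (perm_bits n ?\<sigma>) ?R) {S. crit n (xor_bits S x) = c \<and> trapb (xor_bits S x) c}"
  proof (subst measure_map_pmf, rule measure_cong_supp[OF supp])
    show "{S. c < crit n (xor_bits S x)} \<inter> bitstrings n =
      perm_bits n ?\<sigma> -` {S. crit n (xor_bits S x) = c \<and> trapb (xor_bits S x) c} \<inter> bitstrings n"
    proof (intro set_eqI iffI)
      fix S assume "S \<in> {S. c < crit n (xor_bits S x)} \<inter> bitstrings n"
      hence S: "length S = n" "c < crit n (xor_bits S x)" by (auto simp: bitstrings_def)
      hence all: "\<forall>i<2*c+2. xor_bits S x ! i" using crit_gt_iff[OF n _ c(2), of "xor_bits S x"] lx by auto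
      have "(\<forall>i<2*c. xor_bits (perm_bits n ?\<sigma> S) x ! i) \<and> \<not> xor_bits (perm_bits n ?\<sigma> S) x ! (2*c)
          \<and> \<not> xor_bits (perm_bits n ?\<sigma> S) x ! (2*c+1)"
        using all c1 S lx xmix by (auto simp: Transposition.transpose_def)
      thus "S \<in> perm_bits n ?\<sigma> -` {S. crit n (xor_bits S x) = c \<and> trapb (xor_bits S x) c} \<inter> bitstrings n"
        using crit_trap_iff[OF n _ c(2), of "xor_bits (perm_bits n ?\<sigma> S) x"] S lx by (auto simp: bitstrings_def)
    next
      fix S assume "S \<in> perm_bits n ?\<sigma> -` {S. crit n (xor_bits S x) = c \<and> trapb (xor_bits S x) c} \<inter> bitstrings n"
      hence S: "length S = n" "crit n (xor_bits (perm_bits n ?\<sigma> S) x) = c \<and> trapb (xor_bits (perm_bits n ?\<sigma> S) x) c"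
        by (auto simp: bitstrings_def)
      hence t: "(\<forall>i<2*c. xor_bits (perm_bits n ?\<sigma> S) x ! i) \<and> \<not> xor_bits (perm_bits n ?\<sigma> S) x ! (2*c)
          \<and> \<not> xor_bits (perm_bits n ?\<sigma> S) x ! (2*c+1)"
        using crit_trap_iff[OF n _ c(2), of "xor_bits (perm_bits n ?\<sigma> S) x"] lx by auto
      have "\<forall>i<2*c+2. xor_bits S x ! i"
      proof (intro allI impI)
        fix i assume i: "i < 2*c+2"
        consider "i < 2*c" | "i = 2*c" | "i = 2*c+1" using i by linarith
        thus "xor_bits S x ! i"
        proof cases
          case 1 thus ?thesis using t c1 S lx by (auto simp: Transposition.transpose_def)
        next
          case 2 thus ?thesis using t c1 S lx xmix by (auto simp: Transposition.transpose_def)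
        next
          case 3 thus ?thesis using t c1 S lx xmix by (auto simp: Transposition.transpose_def)
        qed
      qed
      thus "S \<in> {S. c < crit n (xor_bits S x)} \<inter> bitstrings n"
        using crit_gt_iff[OF n _ c(2), of "xor_bits S x"] S lx by (auto simp: bitstrings_def)
    qed
  qed
  also have "\<dots> = measure ?R {S. crit n (xor_bits S x) = c \<and> trapb (xor_bits S x) c}"
    by (simp only: unb_perm[OF V \<sigma>])
  also have "\<dots> = measure (V x) {q. crit n q = c \<and> trapb q c}"
    by (subst unb_from_zero[OF V x]) simp
  finally show ?thesis .
qed

lemma trap_prob:
  assumes n: "even n" and V: "unary_unbiased n V" and x: "x \<in> bitstrings n"
    and c: "crit n x = c" "c < n div 2" and trap: "trapb x c" and c1: "1 \<le> c"
  shows "measure (V x) {q. c < crit n q} \<le> 1 / (real c)^2"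
proof -
  let ?R = "V (replicate n False)"
  define G where "G = {S. (\<forall>i<2*c. \<not> S!i) \<and> S!(2*c) \<and> S!(2*c+1)}"
  have lx: "length x = n" using x by (simp add: bitstrings_def)
  have c2: "2*c+1 < n" using c n by auto
  have xpre: "\<forall>i<2*c. x!i"
  proof (intro allI impI)
    fix i assume i: "i < 2*c"
    hence "okb x (i div 2)" using c crit_props(2)[of "i div 2" n x] by auto
    moreover have "i = 2*(i div 2) \<or> i = 2*(i div 2)+1" by auto
    ultimately show "x!i" unfolding okb_def by metis
  qed
  have xt: "\<not> x!(2*c)" "\<not> x!(2*c+1)" using trap unfolding trapb_def by auto
  have supp: "set_pmf ?R \<subseteq> bitstrings n" by (rule unb_supp[OF V]) (simp add: bitstrings_def)
  have e1: "measure (V x) {q. c < crit n q} = measure ?R G"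
  proof -
    have "measure (V x) {q. c < crit n q} = measure ?R {S. c < crit n (xor_bits S x)}"
      by (subst unb_from_zero[OF V x]) simp
    also have "\<dots> = measure ?R G"
    proof (rule measure_cong_supp[OF supp], intro set_eqI iffI)
      fix S assume "S \<in> {S. c < crit n (xor_bits S x)} \<inter> bitstrings n"
      hence S: "length S = n" "c < crit n (xor_bits S x)" by (auto simp: bitstrings_def)
      hence all: "\<forall>i<2*c+2. xor_bits S x ! i" using crit_gt_iff[OF n _ c(2), of "xor_bits S x"] lx by auto
      have "\<not> S!i" if "i < 2*c" for i
        using all[rule_format, of i] xpre[rule_format, of i] that S lx c2 by auto
      moreover have "S!(2*c)" using all[rule_format, of "2*c"] xt S lx c2 by auto
      moreover have "S!(2*c+1)" using all[rule_format, of "2*c+1"] xt S lx c2 by auto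
      ultimately have "S \<in> G" unfolding G_def by auto
      thus "S \<in> G \<inter> bitstrings n" using S by (simp add: bitstrings_def)
    next
      fix S assume "S \<in> G \<inter> bitstrings n"
      hence S: "length S = n" "S \<in> G" by (auto simp: bitstrings_def)
      have "\<forall>i<2*c+2. xor_bits S x ! i"
      proof (intro allI impI)
        fix i assume i: "i < 2*c+2"
        consider "i < 2*c" | "i = 2*c" | "i = 2*c+1" using i by linarith
        thus "xor_bits S x ! i" using S xpre xt lx c2 unfolding G_def by cases auto
      qed
      thus "S \<in> {S. c < crit n (xor_bits S x)} \<inter> bitstrings n"
        using crit_gt_iff[OF n _ c(2), of "xor_bits S x"] S lx by (auto simp: bitstrings_def)
    qed
    finally show ?thesis .
  qed
  define \<sigma> where "\<sigma> = (\<lambda>(a::nat,b::nat). Transposition.transpose (2*c) a \<circ> Transposition.transpose (2*c+1) b)"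
  define I where "I = {..<c} \<times> {c..<2*c}"
  define E where "E = (\<lambda>ab. perm_bits n (\<sigma> ab) -` G)"
  have \<sigma>perm: "\<sigma> ab permutes {0..<n}" if "ab \<in> I" for ab
    using that c2 unfolding \<sigma>_def I_def
    by (auto intro!: permutes_compose permutes_swap_id)
  have Emeas: "measure ?R (E ab) = measure ?R G" if "ab \<in> I" for ab
  proof -
    have "measure ?R (E ab) = measure (map_pmf (perm_bits n (\<sigma> ab)) ?R) G"
      unfolding E_def by simp
    also have "\<dots> = measure ?R G" by (simp only: unb_perm[OF V \<sigma>perm[OF that]])
    finally show ?thesis .
  qed
  have Echar: "S!a \<and> S!b \<and> (\<forall>i<2*c. i \<noteq> a \<and> i \<noteq> b \<longrightarrow> \<not> S!i)"
    if "(a,b) \<in> I" "S \<in> E (a,b)" for a b S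
  proof -
    have ab: "a < c" "c \<le> b" "b < 2*c" using that(1) unfolding I_def by auto
    have PG: "perm_bits n (\<sigma> (a,b)) S \<in> G" using that(2) unfolding E_def by simp
    have s1: "\<sigma> (a,b) (2*c) = a" "\<sigma> (a,b) (2*c+1) = b"
      using ab unfolding \<sigma>_def by (auto simp: Transposition.transpose_def)
    have s2: "\<sigma> (a,b) i = i" if "i < 2*c" "i \<noteq> a" "i \<noteq> b" for i
      using ab that unfolding \<sigma>_def by (auto simp: Transposition.transpose_def)
    have Gd: "\<forall>i<2*c. \<not> perm_bits n (\<sigma> (a,b)) S ! i" "perm_bits n (\<sigma> (a,b)) S ! (2*c)"
      "perm_bits n (\<sigma> (a,b)) S ! (2*c+1)" using PG unfolding G_def by auto
    have "S!a" using Gd(2) c2 s1 by simp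
    moreover have "S!b" using Gd(3) c2 s1 by simp
    moreover have "\<forall>i<2*c. i \<noteq> a \<and> i \<noteq> b \<longrightarrow> \<not> S!i"
    proof (intro allI impI)
      fix i assume "i < 2*c" "i \<noteq> a \<and> i \<noteq> b"
      thus "\<not> S!i" using Gd(1) c2 s2[of i] by auto
    qed
    ultimately show ?thesis by blast
  qed
  have disj: "disjoint_family_on E I"
  proof (unfold disjoint_family_on_def, intro ballI impI)
    fix ab ab' assume in1: "ab \<in> I" and in2: "ab' \<in> I" and ne: "ab \<noteq> ab'"
    obtain a b where ab: "ab = (a,b)" by force
    obtain a' b' where ab': "ab' = (a',b')" by force
    show "E ab \<inter> E ab' = {}"
    proof (rule ccontr)
      assume "E ab \<inter> E ab' \<noteq> {}"
      then obtain S where S: "S \<in> E (a,b)" "S \<in> E (a',b')" using ab ab' by auto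
      have r: "a < c" "c \<le> b" "b < 2*c" "a' < c" "c \<le> b'" "b' < 2*c" using in1 in2 ab ab' unfolding I_def by auto
      note h1 = Echar[OF in1[unfolded ab] S(1)] and h2 = Echar[OF in2[unfolded ab'] S(2)]
      have "a' = a" using h1 h2 r by (metis less_trans nat_neq_iff not_le)
      moreover have "b' = b" using h1 h2 r by (metis nat_neq_iff not_le less_le_trans)
      ultimately show False using ne ab ab' by simp
    qed
  qed
  have "(\<Sum>ab\<in>I. measure ?R (E ab)) = measure ?R (\<Union>ab\<in>I. E ab)"
    by (rule measure_finite_Union[symmetric]) (use disj in \<open>auto simp: I_def\<close>)
  also have "\<dots> \<le> 1" by simp
  finally have "(\<Sum>ab\<in>I. measure ?R (E ab)) \<le> 1" .
  moreover have "(\<Sum>ab\<in>I. measure ?R (E ab)) = real (c*c) * measure ?R G"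
    using Emeas by (simp add: I_def)
  ultimately have "real (c*c) * measure ?R G \<le> 1" by simp
  hence "measure ?R G \<le> 1 / (real c)^2" using c1
    by (simp add: field_simps power2_eq_square)
  thus ?thesis using e1 by simp
qed

subsection \<open>The process\<close>

lemma pmf_integral_cong:
  fixes f g :: "'a \<Rightarrow> real"
  shows "(\<And>x. x \<in> set_pmf M \<Longrightarrow> f x = g x) \<Longrightarrow> (\<integral>x. f x \<partial>measure_pmf M) = (\<integral>x. g x \<partial>measure_pmf M)"
  by (rule integral_cong_AE) (auto intro: AE_pmfI)

definition acc :: "(real list \<Rightarrow> bool pmf) \<Rightarrow> nat \<Rightarrow> real list \<Rightarrow> bool list \<Rightarrow> bool list \<Rightarrow> bool pmf" where
  "acc Tie n h x q = (if dlb n q > dlb n x then return_pmf True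
     else if dlb n q < dlb n x then return_pmf False else Tie (h @ [dlb n q]))"

lemma step_False: "bb_step n (dlb n) Op Tie (h,x,False) = bind_pmf (Op h x) (\<lambda>q.
   map_pmf (\<lambda>k. (h @ [dlb n q], if k then q else x, is_opt n (dlb n) q)) (acc Tie n h x q))"
  unfolding bb_step_def acc_def Let_def map_pmf_def by simp

lemma step_True: "bb_step n f Op Tie (h,x,True) = return_pmf (h,x,True)"
  unfolding bb_step_def by simp

lemma acc_supp:
  assumes "k \<in> set_pmf (acc Tie n h x q)"
  shows "k \<Longrightarrow> dlb n x \<le> dlb n q" "\<not> k \<Longrightarrow> dlb n q \<le> dlb n x"
  using assms unfolding acc_def by (auto split: if_splits)

definition goodst :: "nat \<Rightarrow> bb_state \<Rightarrow> bool" where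
  "goodst n s \<longleftrightarrow> length (fst (snd s)) = n \<and> (snd (snd s) \<longleftrightarrow> fst (snd s) = replicate n True)"

definition beyond :: "nat \<Rightarrow> bool list \<Rightarrow> nat \<Rightarrow> bool" where
  "beyond n z c \<longleftrightarrow> (\<forall>i<n. z!i \<longrightarrow> 2*c+2 \<le> i)"

definition Tz :: "nat \<Rightarrow> bool list \<Rightarrow> bb_state \<Rightarrow> bb_state" where
  "Tz n z s = (case s of (h,x,d) \<Rightarrow>
     if length x = n \<and> beyond n z (crit n x) then (h, xor_bits x z, d) else (h,x,d))"

lemma agree_xor:
  assumes "length x = n" "length z = n" "beyond n z c"
  shows "agree n (2*c+2) x (xor_bits x z)"
  using assms unfolding agree_def beyond_def by auto

lemma beyond_mono: "beyond n z c' \<Longrightarrow> c \<le> c' \<Longrightarrow> beyond n z c"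
  unfolding beyond_def by force

lemma Tz_invol:
  assumes n: "even n" and z: "length z = n"
  shows "Tz n z (Tz n z s) = s"
proof -
  obtain h x d where s: "s = (h,x,d)" by (cases s) auto
  show ?thesis
  proof (cases "length x = n \<and> beyond n z (crit n x)")
    case True
    have "crit n (xor_bits x z) = crit n x"
      using agree_crit(1)[OF n agree_xor[OF _ z, of x "crit n x"]] True by auto
    thus ?thesis using True s z by (auto simp: Tz_def xor_xor)
  next
    case False thus ?thesis using s by (auto simp: Tz_def)
  qed
qed

lemma invol_inj: "(\<And>s. g (g s) = s) \<Longrightarrow> inj g"
  by (metis injI)

lemma map_invol_iff:
  assumes "\<And>s. g (g s) = s"
  shows "map_pmf g M = M \<longleftrightarrow> (\<forall>s. pmf M (g s) = pmf M s)"
proof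
  assume "map_pmf g M = M"
  thus "\<forall>s. pmf M (g s) = pmf M s" using pmf_map_inj'[OF invol_inj[OF assms], of M] by metis
next
  assume a: "\<forall>s. pmf M (g s) = pmf M s"
  show "map_pmf g M = M"
  proof (rule pmf_eqI)
    fix s
    have "pmf (map_pmf g M) s = pmf (map_pmf g M) (g (g s))" using assms by simp
    also have "\<dots> = pmf M (g s)" by (rule pmf_map_inj'[OF invol_inj[OF assms]])
    finally show "pmf (map_pmf g M) s = pmf M s" using a by simp
  qed
qed

lemma integral_invol:
  fixes F :: "'a \<Rightarrow> real"
  assumes "map_pmf g M = M"
  shows "(\<integral>s. F s \<partial>measure_pmf M) = (\<integral>s. F (g s) \<partial>measure_pmf M)"
proof -
  have "(\<integral>s. F s \<partial>measure_pmf M) = (\<integral>s. F s \<partial>measure_pmf (map_pmf g M))" using assms by simp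
  also have "\<dots> = (\<integral>s. F (g s) \<partial>measure_pmf M)" by simp
  finally show ?thesis .
qed

locale proc =
  fixes n :: nat and Op :: "real list \<Rightarrow> bool list \<Rightarrow> bool list pmf" and Tie :: "real list \<Rightarrow> bool pmf"
  assumes n: "even n" and unb: "\<And>h. unary_unbiased n (Op h)"
begin

abbreviation "PP t \<equiv> bb_state n (dlb n) Op Tie t"
abbreviation "stp \<equiv> bb_step n (dlb n) Op Tie"

lemma is_opt_iff': "length q = n \<Longrightarrow> is_opt n (dlb n) q \<longleftrightarrow> q = replicate n True"
  using is_opt_iff[OF n] crit_full_iff[OF n] by auto

lemma not_ones_less:
  assumes "length x = n" "x \<noteq> replicate n True"
  shows "crit n x < n div 2" "dlb n x < real n"
proof -
  show c: "crit n x < n div 2" using crit_full_iff[OF n assms(1)] assms(2) crit_props(1)[of n x] by auto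
  show "dlb n x < real n" using c n by (auto simp: dlb_crit)
qed

lemma ones_dlb: "dlb n (replicate n True) = real n"
  using crit_full_iff[OF n] by (simp add: dlb_crit)

lemma step_good:
  assumes g: "goodst n s" and s': "s' \<in> set_pmf (stp s)"
  shows "goodst n s' \<and> crit n (fst (snd s)) \<le> crit n (fst (snd s'))"
proof -
  obtain h x d where s: "s = (h,x,d)" by (cases s) auto
  show ?thesis
  proof (cases d)
    case True thus ?thesis using s s' g by (simp add: step_True)
  next
    case False
    have lx: "length x = n" and xn: "x \<noteq> replicate n True" using g s False by (auto simp: goodst_def)
    have xb: "x \<in> bitstrings n" using lx by (simp add: bitstrings_def)
    from s' obtain q k where q: "q \<in> set_pmf (Op h x)" and k: "k \<in> set_pmf (acc Tie n h x q)"
      and s'eq: "s' = (h @ [dlb n q], if k then q else x, is_opt n (dlb n) q)"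
      using s False by (auto simp: step_False)
    have lq: "length q = n" using unb_supp[OF unb xb] q by (auto simp: bitstrings_def)
    have crit: "crit n x \<le> crit n (fst (snd s'))"
      using s'eq acc_supp[OF k] crit_le_of_dlb[OF n] by (cases k) auto
    have good: "goodst n s'"
    proof (cases "q = replicate n True")
      case True
      hence "dlb n x < dlb n q" using not_ones_less[OF lx xn] ones_dlb by simp
      hence "k" using acc_supp(2)[OF k] by (cases k) auto
      thus ?thesis using s'eq True by (simp add: goodst_def is_opt_iff')
    next
      case False
      thus ?thesis using s'eq lq lx xn by (auto simp: goodst_def is_opt_iff')
    qed
    show ?thesis using good crit s by simp
  qed
qed

lemma P_good: "s \<in> set_pmf (PP t) \<Longrightarrow> goodst n s"
proof (induction t arbitrary: s)
  case 0
  have ne: "bitstrings n \<noteq> {}" by (auto simp: bitstrings_def intro: exI[of _ "replicate n True"])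
  from 0 obtain x where x: "x \<in> bitstrings n" "s = ([dlb n x], x, is_opt n (dlb n) x)"
    by (auto simp: bb_init_def set_pmf_of_set[OF ne finite_bitstrings])
  thus ?case using is_opt_iff' by (auto simp: goodst_def bitstrings_def)
next
  case (Suc t)
  then obtain s0 where "s0 \<in> set_pmf (PP t)" "s \<in> set_pmf (stp s0)" by auto
  thus ?case using Suc.IH step_good by blast
qed

lemma step_finite:
  assumes "goodst n s" shows "finite (set_pmf (stp s))"
proof -
  obtain h x d where s: "s = (h,x,d)" by (cases s) auto
  show ?thesis
  proof (cases d)
    case True thus ?thesis using s by (simp add: step_True)
  next
    case False
    have xb: "x \<in> bitstrings n" using assms s by (simp add: bitstrings_def goodst_def)
    have "finite (set_pmf (Op h x))" using unb_supp[OF unb xb] finite_bitstrings finite_subset by blast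
    moreover have "finite (set_pmf (acc Tie n h x q))" for q by (rule finite_subset[of _ UNIV]) auto
    ultimately show ?thesis using s False by (simp add: step_False)
  qed
qed

lemma P_finite: "finite (set_pmf (PP t))"
proof (induction t)
  case 0
  have ne: "bitstrings n \<noteq> {}" by (auto simp: bitstrings_def intro: exI[of _ "replicate n True"])
  show ?case by (simp add: bb_init_def set_pmf_of_set[OF ne finite_bitstrings] finite_bitstrings)
next
  case (Suc t)
  thus ?case using step_finite P_good by auto
qed


lemma xor_inj: "length a = n \<Longrightarrow> length b = n \<Longrightarrow> length z = n \<Longrightarrow> xor_bits a z = xor_bits b z \<longleftrightarrow> a = b"
  by (metis xor_xor)

lemma beyond_full: "length z = n \<Longrightarrow> beyond n z (n div 2) \<Longrightarrow> length x = n \<Longrightarrow> xor_bits x z = x"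
  using n by (intro nth_equalityI) (auto simp: beyond_def)

lemma step_pointwise:
  assumes g: "goodst n s" and lx': "length x' = n" and bz: "beyond n z (crit n x')" and lz: "length z = n"
  shows "pmf (stp (Tz n z s)) (h', xor_bits x' z, d') = pmf (stp s) (h', x', d')"
proof -
  obtain h x d where s: "s = (h,x,d)" by (cases s) auto
  have lx: "length x = n" using g s by (simp add: goodst_def)
  have xb: "x \<in> bitstrings n" using lx by (simp add: bitstrings_def)
  have zb: "z \<in> bitstrings n" using lz by (simp add: bitstrings_def)
  have cx': "crit n (xor_bits x' z) = crit n x'" "dlb n (xor_bits x' z) = dlb n x'"
    using agree_crit[OF n agree_xor[OF lx' lz bz]] by auto
  show ?thesis
  proof (cases d)
    case True
    hence xo: "x = replicate n True" using g s by (simp add: goodst_def)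
    hence ck: "crit n x = n div 2" using crit_full_iff[OF n] by simp
    have "Tz n z s = s" using s ck beyond_full[OF lz _ lx] by (auto simp: Tz_def)
    moreover have "(s = (h', xor_bits x' z, d')) = (s = (h', x', d'))"
    proof (cases "x' = replicate n True")
      case True
      hence "crit n x' = n div 2" using crit_full_iff[OF n] by simp
      thus ?thesis using beyond_full[OF lz _ lx'] bz True by simp
    next
      case False
      hence "crit n x' \<noteq> n div 2" using crit_full_iff[OF n lx'] by simp
      hence "xor_bits x' z \<noteq> replicate n True" using cx' crit_full_iff[OF n] by force
      thus ?thesis using False s xo by auto
    qed
    ultimately show ?thesis using s True by (auto simp: step_True indicator_def)
  next
    case False
    show ?thesis
    proof (cases "beyond n z (crit n x)")
      case bx: True
      let ?xt = "xor_bits x z"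
      have Tzs: "Tz n z s = (h, ?xt, False)" using s False bx lx by (simp add: Tz_def)
      have cx: "crit n ?xt = crit n x" "dlb n ?xt = dlb n x"
        using agree_crit[OF n agree_xor[OF lx lz bx]] by auto
      have lxt: "length ?xt = n" using lx lz by simp
      have "pmf (stp (h, ?xt, False)) (h', xor_bits x' z, d') =
        (\<integral>q. pmf (map_pmf (\<lambda>k. (h @ [dlb n (xor_bits q z)], if k then xor_bits q z else ?xt,
              is_opt n (dlb n) (xor_bits q z))) (acc Tie n h ?xt (xor_bits q z))) (h', xor_bits x' z, d') \<partial>Op h x)"
        by (simp add: step_False unb_xor[OF unb xb zb] bind_map_pmf pmf_bind)
      also have "\<dots> = (\<integral>q. pmf (map_pmf (\<lambda>k. (h @ [dlb n q], if k then q else x,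
              is_opt n (dlb n) q)) (acc Tie n h x q)) (h', x', d') \<partial>Op h x)"
      proof (rule pmf_integral_cong)
        fix q assume qs: "q \<in> set_pmf (Op h x)"
        have lq: "length q = n" using unb_supp[OF unb xb] qs by (auto simp: bitstrings_def)
        let ?qt = "xor_bits q z"
        have lqt: "length ?qt = n" using lq lz by simp
        have agq: "agree n (2 * crit n x + 2) q ?qt" by (rule agree_xor[OF lq lz bx])
        have accq: "acc Tie n h ?xt ?qt = acc Tie n h x q"
        proof (cases "crit n q \<le> crit n x")
          case True
          thus ?thesis using agree_crit[OF n agq] cx by (simp add: acc_def)
        next
          case False
          hence "crit n x < crit n ?qt" using agree_crit_gt[OF n agq] by simp
          hence "dlb n ?xt < dlb n ?qt" using dlb_less_of_crit[OF n] cx by metis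
          moreover have "dlb n x < dlb n q" using False dlb_less_of_crit[OF n] by simp
          ultimately show ?thesis using cx by (simp add: acc_def)
        qed
        have "measure (acc Tie n h x q) ((\<lambda>k. (h @ [dlb n ?qt], if k then ?qt else ?xt, is_opt n (dlb n) ?qt)) -` {(h', xor_bits x' z, d')})
          = measure (acc Tie n h x q) ((\<lambda>k. (h @ [dlb n q], if k then q else x, is_opt n (dlb n) q)) -` {(h', x', d')})"
        proof (rule measure_cong_supp[of _ "set_pmf (acc Tie n h x q)"], simp, intro set_eqI iffI)
          fix k assume a: "k \<in> (\<lambda>k. (h @ [dlb n ?qt], if k then ?qt else ?xt, is_opt n (dlb n) ?qt)) -` {(h', xor_bits x' z, d')} \<inter> set_pmf (acc Tie n h x q)"
          show "k \<in> (\<lambda>k. (h @ [dlb n q], if k then q else x, is_opt n (dlb n) q)) -` {(h', x', d')} \<inter> set_pmf (acc Tie n h x q)"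
          proof (cases k)
            case True
            hence "?qt = xor_bits x' z" using a by auto
            hence qx': "q = x'" using xor_inj[OF lq lx' lz] by simp
            moreover have "is_opt n (dlb n) ?qt = is_opt n (dlb n) q"
              using is_opt_iff[OF n lqt] is_opt_iff[OF n lq] cx' qx' by simp
            ultimately show ?thesis using a True cx' by auto
          next
            case False
            hence "dlb n q \<le> dlb n x" using acc_supp(2) a by blast
            hence "crit n q \<le> crit n x" by (rule crit_le_of_dlb[OF n])
            note e = agree_crit[OF n agq this]
            have "?xt = xor_bits x' z" using a False by auto
            hence "x = x'" using xor_inj[OF lx lx' lz] by simp
            moreover have "is_opt n (dlb n) ?qt = is_opt n (dlb n) q"
              using is_opt_iff[OF n lqt] is_opt_iff[OF n lq] e by simp
            ultimately show ?thesis using a False e by auto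
          qed
        next
          fix k assume a: "k \<in> (\<lambda>k. (h @ [dlb n q], if k then q else x, is_opt n (dlb n) q)) -` {(h', x', d')} \<inter> set_pmf (acc Tie n h x q)"
          show "k \<in> (\<lambda>k. (h @ [dlb n ?qt], if k then ?qt else ?xt, is_opt n (dlb n) ?qt)) -` {(h', xor_bits x' z, d')} \<inter> set_pmf (acc Tie n h x q)"
          proof (cases k)
            case True
            hence qx': "q = x'" using a by auto
            moreover have "is_opt n (dlb n) ?qt = is_opt n (dlb n) q"
              using is_opt_iff[OF n lqt] is_opt_iff[OF n lq] cx' qx' by simp
            ultimately show ?thesis using a True cx' by auto
          next
            case False
            hence "dlb n q \<le> dlb n x" using acc_supp(2) a by blast
            hence "crit n q \<le> crit n x" by (rule crit_le_of_dlb[OF n])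
            note e = agree_crit[OF n agq this]
            have "x = x'" using a False by auto
            moreover have "is_opt n (dlb n) ?qt = is_opt n (dlb n) q"
              using is_opt_iff[OF n lqt] is_opt_iff[OF n lq] e by simp
            ultimately show ?thesis using a False e by auto
          qed
        qed
        thus "pmf (map_pmf (\<lambda>k. (h @ [dlb n ?qt], if k then ?qt else ?xt, is_opt n (dlb n) ?qt)) (acc Tie n h ?xt ?qt)) (h', xor_bits x' z, d')
          = pmf (map_pmf (\<lambda>k. (h @ [dlb n q], if k then q else x, is_opt n (dlb n) q)) (acc Tie n h x q)) (h', x', d')"
          by (simp add: pmf_map accq)
      qed
      also have "\<dots> = pmf (stp s) (h', x', d')"
        by (simp add: s False step_False pmf_bind)
      finally show ?thesis using Tzs by simp
    next
      case bx: False
      have Tzs: "Tz n z s = s" using s bx by (simp add: Tz_def)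
      have lt: "crit n x' < crit n x" using bx beyond_mono[OF bz] by (meson not_le)
      have "(h', x', d') \<notin> set_pmf (stp s)" using step_good[OF g] lt s by fastforce
      moreover have "(h', xor_bits x' z, d') \<notin> set_pmf (stp s)" using step_good[OF g] lt s cx' by fastforce
      ultimately show ?thesis using Tzs by (simp add: set_pmf_eq)
    qed
  qed
qed


lemma P_inv:
  assumes lz: "length z = n"
  shows "map_pmf (Tz n z) (PP t) = PP t"
proof (induction t)
  case 0
  define \<phi> where "\<phi> x = (if beyond n z (crit n x) then xor_bits x z else x)" for x
  define g where "g x = ([dlb n x], x, is_opt n (dlb n) x)" for x
  have ne: "bitstrings n \<noteq> {}" by (auto simp: bitstrings_def intro: exI[of _ "replicate n True"])
  have \<phi>c: "crit n (\<phi> x) = crit n x \<and> dlb n (\<phi> x) = dlb n x \<and> length (\<phi> x) = n" if "x \<in> bitstrings n" for x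
    using that agree_crit[OF n agree_xor[OF _ lz]] lz by (auto simp: \<phi>_def bitstrings_def)
  have \<phi>\<phi>: "\<phi> (\<phi> x) = x" if "x \<in> bitstrings n" for x
    using that \<phi>c[OF that] lz by (auto simp: \<phi>_def bitstrings_def xor_xor)
  have \<phi>b: "\<phi> x \<in> bitstrings n" if "x \<in> bitstrings n" for x
    using \<phi>c[OF that] by (simp add: bitstrings_def)
  have inj: "inj_on \<phi> (bitstrings n)" by (rule inj_on_inverseI[where g=\<phi>]) (rule \<phi>\<phi>)
  have img: "\<phi> ` bitstrings n = bitstrings n"
  proof
    show "\<phi> ` bitstrings n \<subseteq> bitstrings n" using \<phi>b by auto
    show "bitstrings n \<subseteq> \<phi> ` bitstrings n" using \<phi>\<phi> \<phi>b by (metis image_eqI subsetI)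
  qed
  have U: "map_pmf \<phi> (pmf_of_set (bitstrings n)) = pmf_of_set (bitstrings n)"
    using map_pmf_of_set_inj[OF inj ne finite_bitstrings] img by simp
  have "map_pmf (Tz n z) (PP 0) = map_pmf (\<lambda>x. Tz n z (g x)) (pmf_of_set (bitstrings n))"
    by (simp add: bb_init_def g_def map_pmf_comp)
  also have "\<dots> = map_pmf (\<lambda>x. g (\<phi> x)) (pmf_of_set (bitstrings n))"
  proof (rule map_pmf_cong[OF refl])
    fix x assume "x \<in> set_pmf (pmf_of_set (bitstrings n))"
    hence xb: "x \<in> bitstrings n" using set_pmf_of_set[OF ne finite_bitstrings] by simp
    hence lx: "length x = n" by (simp add: bitstrings_def)
    have "is_opt n (dlb n) (\<phi> x) = is_opt n (dlb n) x"
      using is_opt_iff[OF n lx] is_opt_iff[OF n] \<phi>c[OF xb] by simp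
    thus "Tz n z (g x) = g (\<phi> x)" using \<phi>c[OF xb] lx by (auto simp: Tz_def g_def \<phi>_def)
  qed
  also have "\<dots> = map_pmf g (map_pmf \<phi> (pmf_of_set (bitstrings n)))" by (simp add: map_pmf_comp)
  also have "\<dots> = PP 0" unfolding U by (simp add: bb_init_def g_def[abs_def])
  finally show ?case .
next
  case (Suc t)
  have inv: "\<And>s. Tz n z (Tz n z s) = s" using Tz_invol[OF n lz] .
  have "\<forall>s'. pmf (PP (Suc t)) (Tz n z s') = pmf (PP (Suc t)) s'"
  proof
    fix s' :: bb_state
    obtain h' x' d' where s': "s' = (h',x',d')" by (cases s') auto
    show "pmf (PP (Suc t)) (Tz n z s') = pmf (PP (Suc t)) s'"
    proof (cases "length x' = n \<and> beyond n z (crit n x')")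
      case False thus ?thesis using s' by (auto simp: Tz_def)
    next
      case True
      have Ts': "Tz n z s' = (h', xor_bits x' z, d')" using True s' by (simp add: Tz_def)
      have "PP (Suc t) = bind_pmf (map_pmf (Tz n z) (PP t)) stp" using Suc.IH by simp
      also have "\<dots> = bind_pmf (PP t) (\<lambda>s. stp (Tz n z s))" by (simp add: bind_map_pmf)
      finally have e: "PP (Suc t) = bind_pmf (PP t) (\<lambda>s. stp (Tz n z s))" .
      have "pmf (PP (Suc t)) (Tz n z s') = (\<integral>s. pmf (stp (Tz n z s)) (h', xor_bits x' z, d') \<partial>PP t)"
        by (subst e) (simp add: pmf_bind Ts')
      also have "\<dots> = (\<integral>s. pmf (stp s) (h', x', d') \<partial>PP t)"
      proof (rule pmf_integral_cong)
        fix s assume "s \<in> set_pmf (PP t)"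
        from step_pointwise[OF P_good[OF this] conjunct1[OF True] conjunct2[OF True] lz]
        show "pmf (stp (Tz n z s)) (h', xor_bits x' z, d') = pmf (stp s) (h', x', d')" .
      qed
      also have "\<dots> = pmf (PP (Suc t)) s'" by (simp add: pmf_bind s')
      finally show ?thesis .
    qed
  qed
  thus ?case using map_invol_iff[OF inv] by blast
qed

end


lemma integral_bind_pmf':
  fixes f :: "'b \<Rightarrow> real"
  assumes "\<And>y. \<bar>f y\<bar> \<le> B"
  shows "(\<integral>y. f y \<partial>measure_pmf (bind_pmf M N)) = (\<integral>x. \<integral>y. f y \<partial>measure_pmf (N x) \<partial>measure_pmf M)"
  using measurable_measure_pmf[of N] unfolding measure_pmf_bind
  by (intro integral_bind[where K="count_space UNIV" and B=B and B'=1]) (auto simp: assms measure_pmf.emeasure_space_1)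

lemma integral_bool_pmf:
  fixes f :: "bool \<Rightarrow> real"
  shows "(\<integral>k. f k \<partial>measure_pmf \<mu>) = pmf \<mu> True * f True + (1 - pmf \<mu> True) * f False"
proof -
  have "(\<integral>k. f k \<partial>measure_pmf \<mu>) = (\<Sum>k\<in>UNIV. f k * pmf \<mu> k)"
    by (rule integral_measure_pmf_real) auto
  moreover have "pmf \<mu> True + pmf \<mu> False = 1"
  proof -
    have "set_pmf \<mu> \<subseteq> {False, True}" by auto
    thus ?thesis using sum_pmf_eq_1[of UNIV \<mu>] by (simp add: UNIV_bool add.commute)
  qed
  ultimately show ?thesis by (simp add: UNIV_bool algebra_simps) (metis distrib_left mult.right_neutral)
qed

lemma integral_return_pmf':
  fixes f :: "'a \<Rightarrow> real"
  shows "(\<integral>y. f y \<partial>measure_pmf (return_pmf x)) = f x"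
  by (subst integral_measure_pmf_real[of "{x}"]) auto

definition Ij :: "nat \<Rightarrow> nat \<Rightarrow> nat \<Rightarrow> bool list \<Rightarrow> real" where
  "Ij n M j y = (if j < M then 0 else if j < crit n y then 0 else if j = crit n y then
     (if trapb y j then 2 else 1) else (if okb y j then 0 else 1))"

lemma Ij_bounds: "0 \<le> Ij n M j y" "Ij n M j y \<le> 2" "\<bar>Ij n M j y\<bar> \<le> 2"
  unfolding Ij_def by auto

lemma Ij_lower:
  assumes "j < n div 2"
  shows "(if M \<le> j \<and> \<not> okb y j then 1 else 0) \<le> Ij n M j y"
  using assms crit_props(2)[of j n y] unfolding Ij_def by auto

lemma Ij_eq: "crit n y < j \<Longrightarrow> Ij n M j y = (if M \<le> j \<and> \<not> okb y j then 1 else 0)"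
  unfolding Ij_def by auto

definition bm :: "nat \<Rightarrow> nat \<Rightarrow> bool \<Rightarrow> bool \<Rightarrow> bool list" where
  "bm n j u v = map (\<lambda>i. (i = 2*j \<and> u) \<or> (i = 2*j+1 \<and> v)) [0..<n]"

lemma bm_len[simp]: "length (bm n j u v) = n" unfolding bm_def by simp

lemma bm_beyond: "c < j \<Longrightarrow> beyond n (bm n j u v) c"
  unfolding beyond_def bm_def by auto

lemma bm_not_beyond: "j \<le> c \<Longrightarrow> 2*j+1 < n \<Longrightarrow> u \<or> v \<Longrightarrow> \<not> beyond n (bm n j u v) c"
proof
  assume j: "j \<le> c" "2*j+1 < n" "u \<or> v" and b: "beyond n (bm n j u v) c"
  show False
  proof (cases u)
    case True
    have "bm n j u v ! (2*j)" using True j(2) by (simp add: bm_def)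
    moreover have "2*j < n" using j(2) by simp
    ultimately have "2*c+2 \<le> 2*j" using b unfolding beyond_def by blast
    thus False using j(1) by simp
  next
    case False
    hence "bm n j u v ! (2*j+1)" using j by (simp add: bm_def)
    moreover have "2*j+1 < n" using j(2) by simp
    ultimately have "2*c+2 \<le> 2*j+1" using b unfolding beyond_def by blast
    thus False using j(1) by simp
  qed
qed

lemma bm_zero: "bm n j False False = replicate n False"
  unfolding bm_def by (simp add: map_replicate_const)

definition S4 :: "(bool \<Rightarrow> bool \<Rightarrow> real) \<Rightarrow> real" where
  "S4 F = F False False + F False True + F True False + F True True"

lemma count_okb:
  assumes "length y = n" "2*j+1 < n"
  shows "S4 (\<lambda>u v. if M \<le> j \<and> \<not> okb (xor_bits y (bm n j u v)) j then 1 else 0) = (if M \<le> j then 3 else 0)"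
proof -
  have e: "okb (xor_bits y (bm n j u v)) j \<longleftrightarrow> (y!(2*j) \<noteq> u) \<and> (y!(2*j+1) \<noteq> v)" for u v
    using assms unfolding okb_def bm_def by simp
  show ?thesis unfolding S4_def e by (cases "y!(2*j)"; cases "y!(2*j+1)") auto
qed

context proc
begin

lemma acc_xor:
  assumes lx: "length x = n" and lq: "length q = n" and lz: "length z = n" and bx: "beyond n z (crit n x)"
  shows "acc Tie n h (xor_bits x z) (xor_bits q z) = acc Tie n h x q"
proof -
  have cx: "crit n (xor_bits x z) = crit n x" "dlb n (xor_bits x z) = dlb n x"
    using agree_crit[OF n agree_xor[OF lx lz bx]] by auto
  have agq: "agree n (2 * crit n x + 2) q (xor_bits q z)" by (rule agree_xor[OF lq lz bx])
  show ?thesis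
  proof (cases "crit n q \<le> crit n x")
    case True
    thus ?thesis using agree_crit[OF n agq] cx by (simp add: acc_def)
  next
    case False
    hence "crit n x < crit n (xor_bits q z)" using agree_crit_gt[OF n agq] by simp
    hence "dlb n (xor_bits x z) < dlb n (xor_bits q z)" using dlb_less_of_crit[OF n] cx by metis
    moreover have "dlb n x < dlb n q" using False dlb_less_of_crit[OF n] by simp
    ultimately show ?thesis using cx by (simp add: acc_def)
  qed
qed

lemma Op_finite: "x \<in> bitstrings n \<Longrightarrow> finite (set_pmf (Op h x))"
  using unb_supp[OF unb] finite_bitstrings finite_subset by blast

lemma step_expect:
  fixes \<phi> :: "bool list \<Rightarrow> real"
  assumes "\<And>y. \<bar>\<phi> y\<bar> \<le> B"
  shows "(\<integral>s'. \<phi> (fst (snd s')) \<partial>measure_pmf (stp (h,x,False))) =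
    (\<integral>q. pmf (acc Tie n h x q) True * \<phi> q + (1 - pmf (acc Tie n h x q) True) * \<phi> x \<partial>measure_pmf (Op h x))"
  unfolding step_False
  by (subst integral_bind_pmf'[where B=B]) (simp_all add: assms integral_bool_pmf)

definition Dj :: "nat \<Rightarrow> nat \<Rightarrow> bb_state \<Rightarrow> real" where
  "Dj M j s = (\<integral>s'. Ij n M j (fst (snd s')) \<partial>measure_pmf (stp s)) - Ij n M j (fst (snd s))"

lemma Dj_True: "Dj M j (h,x,True) = 0"
  unfolding Dj_def by (simp add: step_True integral_return_pmf')

lemma Dj_False:
  assumes lx: "length x = n"
  shows "Dj M j (h,x,False) = (\<integral>q. pmf (acc Tie n h x q) True * (Ij n M j q - Ij n M j x) \<partial>measure_pmf (Op h x))"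
proof -
  have fin: "finite (set_pmf (Op h x))" using Op_finite lx by (simp add: bitstrings_def)
  have "(\<integral>s'. Ij n M j (fst (snd s')) \<partial>measure_pmf (stp (h,x,False))) =
    (\<integral>q. pmf (acc Tie n h x q) True * (Ij n M j q - Ij n M j x) + Ij n M j x \<partial>measure_pmf (Op h x))"
    by (subst step_expect[where B=2]) (simp_all add: Ij_bounds algebra_simps)
  also have "\<dots> = (\<integral>q. pmf (acc Tie n h x q) True * (Ij n M j q - Ij n M j x) \<partial>measure_pmf (Op h x)) + Ij n M j x"
    by (subst Bochner_Integration.integral_add) (auto intro!: integrable_measure_pmf_finite[OF fin])
  finally show ?thesis unfolding Dj_def by simp
qed


lemma trap_eq_of_dlb:
  assumes "crit n q = c" "crit n x = c" "c < n div 2" "dlb n q = dlb n x"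
  shows "trapb q c = trapb x c"
proof -
  have "dlb n q = (if trapb q c then real (2*c+1) else real (2*c))"
    using assms(1,3) by (simp add: dlb_crit)
  moreover have "dlb n x = (if trapb x c then real (2*c+1) else real (2*c))"
    using assms(2,3) by (simp add: dlb_crit)
  ultimately show ?thesis using assms(4) by (auto split: if_splits)
qed

lemma crit_pointwise:
  assumes lx: "length x = n" and lq: "length q = n" and c: "crit n x = c" "c < n div 2" and Mc: "M \<le> c"
  shows "pmf (acc Tie n h x q) True * (Ij n M c q - Ij n M c x) =
    - Ij n M c x * indicator {q. c < crit n q} q + (if trapb x c then 0 else 1) * indicator {q. crit n q = c \<and> trapb q c} q"
proof -
  consider (gt) "c < crit n q" | (lt) "crit n q < c" | (eq) "crit n q = c" by linarith
  thus ?thesis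
  proof cases
    case gt
    hence "dlb n x < dlb n q" using dlb_less_of_crit[OF n] c by simp
    moreover have "Ij n M c q = 0" using gt Mc by (simp add: Ij_def)
    ultimately show ?thesis using gt by (simp add: acc_def indicator_def)
  next
    case lt
    hence "dlb n q < dlb n x" using dlb_less_of_crit[OF n] c by simp
    thus ?thesis using lt by (simp add: acc_def indicator_def)
  next
    case eq
    consider (g) "dlb n x < dlb n q" | (l) "dlb n q < dlb n x" | (e) "dlb n q = dlb n x" by linarith
    thus ?thesis
    proof cases
      case g
      have t: "\<not> trapb x c" "trapb q c" using dlb_less_same_crit[OF n _ g] eq c by auto
      hence "Ij n M c q = 2" "Ij n M c x = 1" using eq c Mc by (auto simp: Ij_def)
      thus ?thesis using g eq t by (simp add: acc_def indicator_def)
    next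
      case l
      have t: "\<not> trapb q c" using dlb_less_same_crit[OF n _ l] eq c by auto
      thus ?thesis using l eq by (simp add: acc_def indicator_def)
    next
      case e
      have t: "trapb q c = trapb x c" using trap_eq_of_dlb[OF eq c e] .
      hence "Ij n M c q = Ij n M c x" using eq c by (simp add: Ij_def)
      thus ?thesis using t eq by (auto simp: indicator_def)
    qed
  qed
qed

lemma Dj_crit:
  assumes M1: "1 \<le> M" and g: "goodst n (h,x,False)" and j: "j \<le> crit n x"
  shows "(if crit n x = j then - 2 / (real M)^2 else 0) \<le> Dj M j (h,x,False)"
proof -
  have lx: "length x = n" and xn: "x \<noteq> replicate n True" using g by (auto simp: goodst_def)
  have xb: "x \<in> bitstrings n" using lx by (simp add: bitstrings_def)
  have cK: "crit n x < n div 2" using not_ones_less[OF lx xn] by simp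
  have fin: "finite (set_pmf (Op h x))" using Op_finite[OF xb] .
  have lq: "length q = n" if "q \<in> set_pmf (Op h x)" for q using unb_supp[OF unb xb] that by (auto simp: bitstrings_def)
  show ?thesis
  proof (cases "j < crit n x")
    case True
    have "Dj M j (h,x,False) = (\<integral>q. 0 \<partial>measure_pmf (Op h x))"
      unfolding Dj_False[OF lx]
    proof (rule pmf_integral_cong)
      fix q assume q: "q \<in> set_pmf (Op h x)"
      show "pmf (acc Tie n h x q) True * (Ij n M j q - Ij n M j x) = 0"
      proof (cases "pmf (acc Tie n h x q) True = 0")
        case False
        hence "True \<in> set_pmf (acc Tie n h x q)" by (simp add: set_pmf_eq)
        hence "dlb n x \<le> dlb n q" using acc_supp(1) by blast
        hence "crit n x \<le> crit n q" by (rule crit_le_of_dlb[OF n])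
        thus ?thesis using True by (simp add: Ij_def)
      qed simp
    qed
    thus ?thesis using True by simp
  next
    case False
    hence jc: "j = crit n x" using j by simp
    show ?thesis
    proof (cases "j < M")
      case True
      have "Dj M j (h,x,False) = 0" unfolding Dj_False[OF lx] using True by (simp add: Ij_def)
      thus ?thesis by simp
    next
      case jM: False
      let ?c = "crit n x"
      let ?A1 = "{q. ?c < crit n q}" and ?A2 = "{q. crit n q = ?c \<and> trapb q ?c}"
      have "Dj M j (h,x,False) = (\<integral>q. - Ij n M ?c x * indicator ?A1 q + (if trapb x ?c then 0 else 1) * indicator ?A2 q \<partial>measure_pmf (Op h x))"
        unfolding Dj_False[OF lx] jc
        by (rule pmf_integral_cong) (rule crit_pointwise[OF lx lq refl cK], use jM jc in auto)
      also have "\<dots> = - Ij n M ?c x * measure (Op h x) ?A1 + (if trapb x ?c then 0 else 1) * measure (Op h x) ?A2"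
        by (subst Bochner_Integration.integral_add) (auto intro!: integrable_measure_pmf_finite[OF fin])
      finally have D: "Dj M j (h,x,False) = - Ij n M ?c x * measure (Op h x) ?A1 + (if trapb x ?c then 0 else 1) * measure (Op h x) ?A2" .
      show ?thesis
      proof (cases "trapb x ?c")
        case True
        have I2: "Ij n M ?c x = 2" using True jM jc by (simp add: Ij_def)
        have c1: "1 \<le> ?c" using jM jc M1 by simp
        have "measure (Op h x) ?A1 \<le> 1 / (real ?c)^2" by (rule trap_prob[OF n unb xb refl cK True c1])
        also have "\<dots> \<le> 1 / (real M)^2" using jM jc M1 by (intro divide_left_mono power_mono) auto
        finally have "measure (Op h x) ?A1 \<le> 1 / (real M)^2" .
        thus ?thesis using D I2 True jc by simp
      next
        case False
        have I1: "Ij n M ?c x = 1" using False jM jc by (simp add: Ij_def)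
        have "measure (Op h x) ?A1 = measure (Op h x) ?A2" by (rule swap_prob[OF n unb xb refl cK False])
        thus ?thesis using D I1 False jc by simp
      qed
    qed
  qed
qed


lemma S4_integral:
  fixes F :: "bool \<Rightarrow> bool \<Rightarrow> 'a \<Rightarrow> real"
  assumes "finite (set_pmf N)"
  shows "S4 (\<lambda>u v. \<integral>q. F u v q \<partial>measure_pmf N) = (\<integral>q. S4 (\<lambda>u v. F u v q) \<partial>measure_pmf N)"
  unfolding S4_def
  by (subst Bochner_Integration.integral_add, (auto intro!: integrable_measure_pmf_finite[OF assms])[2])+ simp

lemma Dj_avg:
  assumes g: "goodst n (h,x,False)" and j: "crit n x < j" "j < n div 2"
  shows "0 \<le> S4 (\<lambda>u v. Dj M j (Tz n (bm n j u v) (h,x,False)))"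
proof -
  have lx: "length x = n" using g by (auto simp: goodst_def)
  have xb: "x \<in> bitstrings n" using lx by (simp add: bitstrings_def)
  have fin: "finite (set_pmf (Op h x))" using Op_finite[OF xb] .
  have lq: "length q = n" if "q \<in> set_pmf (Op h x)" for q using unb_supp[OF unb xb] that by (auto simp: bitstrings_def)
  have j1: "2*j+1 < n" using j n by auto
  define \<rho> where "\<rho> q = pmf (acc Tie n h x q) True" for q
  have each: "Dj M j (Tz n (bm n j u v) (h,x,False)) =
     (\<integral>q. \<rho> q * (Ij n M j (xor_bits q (bm n j u v)) - Ij n M j (xor_bits x (bm n j u v))) \<partial>measure_pmf (Op h x))" for u v
  proof -
    let ?m = "bm n j u v"
    have bx: "beyond n ?m (crit n x)" by (rule bm_beyond[OF j(1)])
    have mb: "?m \<in> bitstrings n" by (simp add: bitstrings_def)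
    have "Tz n ?m (h,x,False) = (h, xor_bits x ?m, False)" using bx lx by (simp add: Tz_def)
    hence "Dj M j (Tz n ?m (h,x,False)) = (\<integral>q. pmf (acc Tie n h (xor_bits x ?m) q) True *
        (Ij n M j q - Ij n M j (xor_bits x ?m)) \<partial>measure_pmf (Op h (xor_bits x ?m)))"
      using Dj_False[of "xor_bits x ?m"] lx by simp
    also have "\<dots> = (\<integral>q. pmf (acc Tie n h (xor_bits x ?m) (xor_bits q ?m)) True *
        (Ij n M j (xor_bits q ?m) - Ij n M j (xor_bits x ?m)) \<partial>measure_pmf (Op h x))"
      by (simp add: unb_xor[OF unb xb mb])
    also have "\<dots> = (\<integral>q. \<rho> q * (Ij n M j (xor_bits q ?m) - Ij n M j (xor_bits x ?m)) \<partial>measure_pmf (Op h x))"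
      by (rule pmf_integral_cong) (simp add: \<rho>_def acc_xor[OF lx lq _ bx])
    finally show ?thesis .
  qed
  have "S4 (\<lambda>u v. Dj M j (Tz n (bm n j u v) (h,x,False))) =
    (\<integral>q. S4 (\<lambda>u v. \<rho> q * (Ij n M j (xor_bits q (bm n j u v)) - Ij n M j (xor_bits x (bm n j u v)))) \<partial>measure_pmf (Op h x))"
    unfolding each by (rule S4_integral[OF fin])
  also have "0 \<le> \<dots>"
  proof (rule integral_nonneg_AE, rule AE_pmfI)
    fix q assume q: "q \<in> set_pmf (Op h x)"
    have r: "0 \<le> \<rho> q" by (simp add: \<rho>_def)
    have A: "S4 (\<lambda>u v. Ij n M j (xor_bits x (bm n j u v))) = (if M \<le> j then 3 else 0)"
    proof -
      have "Ij n M j (xor_bits x (bm n j u v)) = (if M \<le> j \<and> \<not> okb (xor_bits x (bm n j u v)) j then 1 else 0)" for u v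
      proof -
        have "crit n (xor_bits x (bm n j u v)) = crit n x"
          using agree_crit(1)[OF n agree_xor[OF lx bm_len bm_beyond[OF j(1)]]] by simp
        thus ?thesis using j(1) by (intro Ij_eq) simp
      qed
      thus ?thesis using count_okb[OF lx j1] by simp
    qed
    have B: "(if M \<le> j then 3 else 0) \<le> S4 (\<lambda>u v. Ij n M j (xor_bits q (bm n j u v)))"
      using count_okb[OF lq[OF q] j1, of M, symmetric] Ij_lower[OF j(2), of M]
      unfolding S4_def by (smt (verit))
    have "S4 (\<lambda>u v. \<rho> q * (Ij n M j (xor_bits q (bm n j u v)) - Ij n M j (xor_bits x (bm n j u v)))) =
      \<rho> q * (S4 (\<lambda>u v. Ij n M j (xor_bits q (bm n j u v))) - S4 (\<lambda>u v. Ij n M j (xor_bits x (bm n j u v))))"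
      unfolding S4_def by (simp add: algebra_simps)
    thus "0 \<le> S4 (\<lambda>u v. \<rho> q * (Ij n M j (xor_bits q (bm n j u v)) - Ij n M j (xor_bits x (bm n j u v))))"
      using A B r by simp
  qed
  finally show ?thesis .
qed


lemma Tz_bm_id:
  assumes "length x = n" "j \<le> crit n x" "2*j+1 < n"
  shows "Tz n (bm n j u v) (h,x,d) = (h,x,d)"
proof (cases "u \<or> v")
  case True thus ?thesis using bm_not_beyond[OF assms(2,3) True] by (simp add: Tz_def)
next
  case False thus ?thesis using assms(1) by (simp add: Tz_def bm_zero xor_zero_right)
qed

definition Bd :: "nat \<Rightarrow> nat \<Rightarrow> bb_state \<Rightarrow> real" where
  "Bd M j s = (if \<not> snd (snd s) \<and> crit n (fst (snd s)) = j then - 2 / (real M)^2 else 0)"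

lemma Dj_S4:
  assumes M1: "1 \<le> M" and g: "goodst n s" and j: "j < n div 2"
  shows "4 * Bd M j s \<le> S4 (\<lambda>u v. Dj M j (Tz n (bm n j u v) s))"
proof -
  obtain h x d where s: "s = (h,x,d)" by (cases s) auto
  have lx: "length x = n" using g s by (simp add: goodst_def)
  have j1: "2*j+1 < n" using j n by auto
  show ?thesis
  proof (cases d)
    case True
    hence "x = replicate n True" using g s by (simp add: goodst_def)
    hence "crit n x = n div 2" using crit_full_iff[OF n] by simp
    hence "Tz n (bm n j u v) s = s" for u v using Tz_bm_id[OF lx _ j1] j s by simp
    thus ?thesis using s True by (simp add: S4_def Dj_True Bd_def)
  next
    case False
    show ?thesis
    proof (cases "j \<le> crit n x")
      case True
      hence "Tz n (bm n j u v) s = s" for u v using Tz_bm_id[OF lx _ j1] s by simp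
      hence "S4 (\<lambda>u v. Dj M j (Tz n (bm n j u v) s)) = 4 * Dj M j s" by (simp add: S4_def)
      moreover have "Bd M j s \<le> Dj M j s" using Dj_crit[OF M1 _ True] g s False by (simp add: Bd_def)
      ultimately show ?thesis by simp
    next
      case c: False
      have "0 \<le> S4 (\<lambda>u v. Dj M j (Tz n (bm n j u v) s))" using Dj_avg[of h x j M] g s False c j by simp
      moreover have "Bd M j s \<le> 0" by (simp add: Bd_def)
      ultimately show ?thesis by simp
    qed
  qed
qed

lemma E_Dj:
  assumes M1: "1 \<le> M" and j: "j < n div 2"
  shows "(\<integral>s. Bd M j s \<partial>measure_pmf (PP t)) \<le> (\<integral>s. Dj M j s \<partial>measure_pmf (PP t))"
proof -
  have fin: "finite (set_pmf (PP t))" by (rule P_finite)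
  have inv: "(\<integral>s. Dj M j s \<partial>measure_pmf (PP t)) = (\<integral>s. Dj M j (Tz n (bm n j u v) s) \<partial>measure_pmf (PP t))" for u v
    by (rule integral_invol[OF P_inv]) simp
  have "4 * (\<integral>s. Bd M j s \<partial>measure_pmf (PP t)) = (\<integral>s. 4 * Bd M j s \<partial>measure_pmf (PP t))" by simp
  also have "\<dots> \<le> (\<integral>s. S4 (\<lambda>u v. Dj M j (Tz n (bm n j u v) s)) \<partial>measure_pmf (PP t))"
    by (rule integral_mono_AE) (auto intro!: integrable_measure_pmf_finite[OF fin] AE_pmfI Dj_S4[OF M1 P_good j])
  also have "\<dots> = S4 (\<lambda>u v. \<integral>s. Dj M j (Tz n (bm n j u v) s) \<partial>measure_pmf (PP t))"
    by (rule S4_integral[OF fin, symmetric])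
  also have "\<dots> = 4 * (\<integral>s. Dj M j s \<partial>measure_pmf (PP t))" unfolding inv[symmetric] S4_def by simp
  finally show ?thesis by simp
qed


definition Wf :: "nat \<Rightarrow> bool list \<Rightarrow> real" where
  "Wf M y = (\<Sum>j<n div 2. Ij n M j y)"

definition aW :: "nat \<Rightarrow> nat \<Rightarrow> real" where
  "aW M t = (\<integral>s. Wf M (fst (snd s)) \<partial>measure_pmf (PP t))"

definition pnd :: "nat \<Rightarrow> real" where
  "pnd t = (\<integral>s. (if snd (snd s) then 0 else 1) \<partial>measure_pmf (PP t))"

lemma Wf_bound: "\<bar>Wf M y\<bar> \<le> 2 * real (n div 2)"
proof -
  have "\<bar>Wf M y\<bar> \<le> (\<Sum>j<n div 2. \<bar>Ij n M j y\<bar>)" unfolding Wf_def by (rule sum_abs)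
  also have "\<dots> \<le> (\<Sum>j<n div 2. 2)" by (rule sum_mono) (rule Ij_bounds)
  finally show ?thesis by simp
qed

lemma step_Wf:
  assumes g: "goodst n s"
  shows "(\<integral>s'. Wf M (fst (snd s')) \<partial>measure_pmf (stp s)) = Wf M (fst (snd s)) + (\<Sum>j<n div 2. Dj M j s)"
proof -
  have fin: "finite (set_pmf (stp s))" by (rule step_finite[OF g])
  have "(\<integral>s'. Wf M (fst (snd s')) \<partial>measure_pmf (stp s)) = (\<Sum>j<n div 2. \<integral>s'. Ij n M j (fst (snd s')) \<partial>measure_pmf (stp s))"
    unfolding Wf_def by (rule Bochner_Integration.integral_sum) (rule integrable_measure_pmf_finite[OF fin])
  also have "\<dots> = (\<Sum>j<n div 2. Dj M j s + Ij n M j (fst (snd s)))" by (simp add: Dj_def)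
  finally show ?thesis by (simp add: sum.distrib Wf_def)
qed

lemma W_drift:
  assumes M1: "1 \<le> M"
  shows "aW M t - 2 / (real M)^2 * pnd t \<le> aW M (Suc t)"
proof -
  have fin: "finite (set_pmf (PP t))" by (rule P_finite)
  have "aW M (Suc t) = (\<integral>s. \<integral>s'. Wf M (fst (snd s')) \<partial>measure_pmf (stp s) \<partial>measure_pmf (PP t))"
    unfolding aW_def by (simp only: bb_state.simps) (rule integral_bind_pmf'[OF Wf_bound])
  also have "\<dots> = (\<integral>s. Wf M (fst (snd s)) + (\<Sum>j<n div 2. Dj M j s) \<partial>measure_pmf (PP t))"
    by (rule pmf_integral_cong) (rule step_Wf[OF P_good])
  also have "\<dots> = aW M t + (\<Sum>j<n div 2. \<integral>s. Dj M j s \<partial>measure_pmf (PP t))"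
    unfolding aW_def
    by (subst Bochner_Integration.integral_add) (auto intro!: integrable_measure_pmf_finite[OF fin] Bochner_Integration.integral_sum)
  finally have e: "aW M (Suc t) = aW M t + (\<Sum>j<n div 2. \<integral>s. Dj M j s \<partial>measure_pmf (PP t))" .
  have "(\<integral>s. - 2 / (real M)^2 * (if snd (snd s) then 0 else 1) \<partial>measure_pmf (PP t)) \<le>
      (\<integral>s. (\<Sum>j<n div 2. Bd M j s) \<partial>measure_pmf (PP t))"
  proof (rule integral_mono_AE, (auto intro!: integrable_measure_pmf_finite[OF fin])[2], rule AE_pmfI)
    fix s :: bb_state
    have "(\<Sum>j<n div 2. Bd M j s) = (if \<not> snd (snd s) \<and> crit n (fst (snd s)) < n div 2 then - 2 / (real M)^2 else 0)"
    proof -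
      have "(\<Sum>j<n div 2. Bd M j s) = (\<Sum>j<n div 2. if crit n (fst (snd s)) = j then (if \<not> snd (snd s) then - 2 / (real M)^2 else 0) else 0)"
        unfolding Bd_def by (rule sum.cong) auto
      also have "\<dots> = (if crit n (fst (snd s)) \<in> {..<n div 2} then (if \<not> snd (snd s) then - 2 / (real M)^2 else 0) else 0)"
        by (rule sum.delta') simp
      finally show ?thesis by auto
    qed
    thus "- 2 / (real M)^2 * (if snd (snd s) then 0 else 1) \<le> (\<Sum>j<n div 2. Bd M j s)" by auto
  qed
  also have "\<dots> = (\<Sum>j<n div 2. \<integral>s. Bd M j s \<partial>measure_pmf (PP t))"
    by (rule Bochner_Integration.integral_sum) (rule integrable_measure_pmf_finite[OF fin])
  also have "\<dots> \<le> (\<Sum>j<n div 2. \<integral>s. Dj M j s \<partial>measure_pmf (PP t))"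
    by (rule sum_mono) (rule E_Dj[OF M1], simp)
  finally have "- 2 / (real M)^2 * pnd t \<le> (\<Sum>j<n div 2. \<integral>s. Dj M j s \<partial>measure_pmf (PP t))"
    unfolding pnd_def by simp
  thus ?thesis using e by simp
qed

lemma W_upper: "aW M t \<le> 2 * real (n div 2) * pnd t"
proof -
  have fin: "finite (set_pmf (PP t))" by (rule P_finite)
  have "aW M t \<le> (\<integral>s. 2 * real (n div 2) * (if snd (snd s) then 0 else 1) \<partial>measure_pmf (PP t))"
    unfolding aW_def
  proof (rule integral_mono_AE, (auto intro!: integrable_measure_pmf_finite[OF fin])[2], rule AE_pmfI)
    fix s assume "s \<in> set_pmf (PP t)"
    hence g: "goodst n s" by (rule P_good)
    show "Wf M (fst (snd s)) \<le> 2 * real (n div 2) * (if snd (snd s) then 0 else 1)"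
    proof (cases "snd (snd s)")
      case True
      hence "crit n (fst (snd s)) = n div 2" using g crit_full_iff[OF n] by (simp add: goodst_def)
      hence "Wf M (fst (snd s)) = 0" unfolding Wf_def by (intro sum.neutral) (auto simp: Ij_def)
      thus ?thesis using True by simp
    next
      case False thus ?thesis using Wf_bound[of M "fst (snd s)"] by simp
    qed
  qed
  thus ?thesis unfolding pnd_def by simp
qed

lemma pnd_mono: "pnd (Suc t) \<le> pnd t"
proof -
  have fin: "finite (set_pmf (PP t))" by (rule P_finite)
  have "pnd (Suc t) = (\<integral>s. \<integral>s'. (if snd (snd s') then 0 else 1) \<partial>measure_pmf (stp s) \<partial>measure_pmf (PP t))"
    unfolding pnd_def by (simp only: bb_state.simps) (rule integral_bind_pmf'[where B=1], simp)
  also have "\<dots> \<le> pnd t" unfolding pnd_def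
  proof (rule integral_mono_AE, (auto intro!: integrable_measure_pmf_finite[OF fin])[2], rule AE_pmfI)
    fix s assume "s \<in> set_pmf (PP t)"
    hence g: "goodst n s" by (rule P_good)
    obtain h x d where s: "s = (h,x,d)" by (cases s) auto
    show "(\<integral>s'. (if snd (snd s') then 0 else 1::real) \<partial>measure_pmf (stp s)) \<le> (if snd (snd s) then 0 else 1)"
    proof (cases d)
      case True thus ?thesis using s by (simp add: step_True integral_return_pmf')
    next
      case False
      have "(\<integral>s'. (if snd (snd s') then 0 else 1::real) \<partial>measure_pmf (stp s)) \<le> (\<integral>s'. 1 \<partial>measure_pmf (stp s))"
        by (rule integral_mono_AE) (auto intro!: integrable_measure_pmf_finite[OF step_finite[OF g]])
      thus ?thesis using False s by simp
    qed
  qed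
  finally show ?thesis .
qed

lemma pnd_prob: "measure_pmf.prob (PP t) {s. \<not> snd (snd s)} = pnd t"
proof -
  have "(\<lambda>s::bb_state. if snd (snd s) then 0 else 1::real) = indicator {s. \<not> snd (snd s)}"
    by (auto simp: indicator_def fun_eq_iff)
  thus ?thesis unfolding pnd_def by simp
qed

lemma pnd_nonneg: "0 \<le> pnd t"
  unfolding pnd_def by (rule integral_nonneg_AE) auto

lemma U_xor_inv:
  assumes mb: "m \<in> bitstrings n"
  shows "map_pmf (\<lambda>x. xor_bits x m) (pmf_of_set (bitstrings n)) = pmf_of_set (bitstrings n)"
proof -
  have ne: "bitstrings n \<noteq> {}" by (auto simp: bitstrings_def intro: exI[of _ "replicate n True"])
  have ii: "xor_bits (xor_bits x m) m = x" if "x \<in> bitstrings n" for x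
    using that mb by (simp add: bitstrings_def xor_xor)
  have inj: "inj_on (\<lambda>x. xor_bits x m) (bitstrings n)" by (rule inj_on_inverseI[where g="\<lambda>x. xor_bits x m"]) (rule ii)
  have img: "(\<lambda>x. xor_bits x m) ` bitstrings n = bitstrings n"
  proof
    show "(\<lambda>x. xor_bits x m) ` bitstrings n \<subseteq> bitstrings n" using xor_bs[OF _ mb] by auto
    show "bitstrings n \<subseteq> (\<lambda>x. xor_bits x m) ` bitstrings n"
      using ii xor_bs[OF _ mb] by (metis image_eqI subsetI)
  qed
  show ?thesis using map_pmf_of_set_inj[OF inj ne finite_bitstrings] img by simp
qed

lemma U_block:
  assumes j: "j < n div 2"
  shows "(\<integral>x. (if \<not> okb x j then 1 else 0::real) \<partial>measure_pmf (pmf_of_set (bitstrings n))) = 3/4"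
proof -
  let ?U = "pmf_of_set (bitstrings n)"
  have ne: "bitstrings n \<noteq> {}" by (auto simp: bitstrings_def intro: exI[of _ "replicate n True"])
  have fin: "finite (set_pmf ?U)" using set_pmf_of_set[OF ne finite_bitstrings] finite_bitstrings by simp
  have j1: "2*j+1 < n" using j n by auto
  define g where "g x = (if \<not> okb x j then 1 else 0::real)" for x
  have inv: "(\<integral>x. g x \<partial>measure_pmf ?U) = (\<integral>x. g (xor_bits x (bm n j u v)) \<partial>measure_pmf ?U)" for u v
    by (rule integral_invol[OF U_xor_inv]) (simp add: bitstrings_def)
  have "4 * (\<integral>x. g x \<partial>measure_pmf ?U) = S4 (\<lambda>u v. \<integral>x. g (xor_bits x (bm n j u v)) \<partial>measure_pmf ?U)"
    unfolding inv[symmetric] S4_def by simp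
  also have "\<dots> = (\<integral>x. S4 (\<lambda>u v. g (xor_bits x (bm n j u v))) \<partial>measure_pmf ?U)" by (rule S4_integral[OF fin])
  also have "\<dots> = (\<integral>x. 3 \<partial>measure_pmf ?U)"
  proof (rule pmf_integral_cong)
    fix x assume "x \<in> set_pmf ?U"
    hence "length x = n" using set_pmf_of_set[OF ne finite_bitstrings] by (simp add: bitstrings_def)
    from count_okb[OF this j1, of 0] show "S4 (\<lambda>u v. g (xor_bits x (bm n j u v))) = 3" by (simp add: g_def)
  qed
  finally show ?thesis unfolding g_def by simp
qed

lemma W_init:
  assumes "M \<le> n div 2"
  shows "3/4 * (real (n div 2) - real M) \<le> aW M 0"
proof -
  let ?U = "pmf_of_set (bitstrings n)"
  have ne: "bitstrings n \<noteq> {}" by (auto simp: bitstrings_def intro: exI[of _ "replicate n True"])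
  have fin: "finite (set_pmf ?U)" using set_pmf_of_set[OF ne finite_bitstrings] finite_bitstrings by simp
  have "aW M 0 = (\<integral>x. Wf M x \<partial>measure_pmf ?U)" unfolding aW_def by (simp add: bb_init_def)
  also have "(\<integral>x. (\<Sum>j\<in>{M..<n div 2}. (if \<not> okb x j then 1 else 0::real)) \<partial>measure_pmf ?U) \<le> \<dots>"
  proof (rule integral_mono_AE, (auto intro!: integrable_measure_pmf_finite[OF fin])[2], rule AE_pmfI)
    fix x :: "bool list"
    have "(\<Sum>j\<in>{M..<n div 2}. (if \<not> okb x j then 1 else 0::real)) = (\<Sum>j<n div 2. (if M \<le> j \<and> \<not> okb x j then 1 else 0))"
      by (rule sum.mono_neutral_cong_left) auto
    also have "\<dots> \<le> Wf M x" unfolding Wf_def by (rule sum_mono) (rule Ij_lower, simp)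
    finally show "(\<Sum>j\<in>{M..<n div 2}. (if \<not> okb x j then 1 else 0::real)) \<le> Wf M x" .
  qed
  also have "(\<integral>x. (\<Sum>j\<in>{M..<n div 2}. (if \<not> okb x j then 1 else 0::real)) \<partial>measure_pmf ?U) =
     (\<Sum>j\<in>{M..<n div 2}. (\<integral>x. (if \<not> okb x j then 1 else 0::real) \<partial>measure_pmf ?U))"
    by (rule Bochner_Integration.integral_sum) (auto intro!: integrable_measure_pmf_finite[OF fin])
  also have "\<dots> = (\<Sum>j\<in>{M..<n div 2}. 3/4::real)"
    by (rule sum.cong[OF refl]) (rule U_block, simp)
  finally show ?thesis using assms by (simp add: of_nat_diff)
qed

end


context proc
begin

lemma a_lower: "1 \<le> M \<Longrightarrow> aW M 0 - 2 / (real M)^2 * (\<Sum>t<T. pnd t) \<le> aW M T"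
proof (induction T)
  case 0 thus ?case by simp
next
  case (Suc T)
  from W_drift[OF Suc.prems, of T] Suc show ?case by (simp add: algebra_simps)
qed

lemma pnd_anti: "t \<le> T \<Longrightarrow> pnd T \<le> pnd t"
proof (induction T)
  case 0 thus ?case by simp
next
  case (Suc T)
  thus ?case using pnd_mono[of T] by (cases "t = Suc T") auto
qed

lemma main_bound:
  assumes M1: "1 \<le> M" and MK: "M \<le> n div 2"
  shows "3/16 * (real M)^2 * (real (n div 2) - real M) \<le> (\<Sum>t<n div 2 * M^2. pnd t)"
proof -
  define T where "T = n div 2 * M^2"
  define S where "S = (\<Sum>t<T. pnd t)"
  have K1: "1 \<le> n div 2" using M1 MK by simp
  have Mpos: "0 < real M" using M1 by simp
  have "(\<Sum>t<T. pnd T) \<le> S" unfolding S_def by (rule sum_mono) (rule pnd_anti, simp)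
  hence TS: "real T * pnd T \<le> S" by simp
  have up: "aW M T \<le> 2 * real (n div 2) * pnd T" by (rule W_upper)
  have "2 * real (n div 2) * pnd T * (real M)^2 = 2 * (real T * pnd T)" unfolding T_def by (simp add: algebra_simps)
  also have "\<dots> \<le> 2 * S" using TS by simp
  finally have "2 * real (n div 2) * pnd T \<le> 2 * S / (real M)^2" using Mpos by (simp add: field_simps)
  hence "aW M T \<le> 2 * S / (real M)^2" using up by simp
  moreover have "aW M 0 - 2 / (real M)^2 * S \<le> aW M T" unfolding S_def by (rule a_lower[OF M1])
  moreover have "2 * S / (real M)^2 + 2 / (real M)^2 * S = 4 * S / (real M)^2" by (simp add: field_simps)
  ultimately have "aW M 0 \<le> 4 * S / (real M)^2" by linarith
  hence "aW M 0 * (real M)^2 \<le> 4 * S" using Mpos by (simp add: field_simps)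
  moreover have "3/4 * (real (n div 2) - real M) \<le> aW M 0" by (rule W_init[OF MK])
  ultimately have "3/4 * (real (n div 2) - real M) * (real M)^2 \<le> 4 * S"
    by (meson Mpos mult_right_mono order_trans zero_le_power2 less_imp_le)
  thus ?thesis unfolding S_def T_def by (simp add: algebra_simps)
qed

end

lemma runtime_ge:
  assumes "proc n Op"
  shows "ennreal (\<Sum>t<T. proc.pnd n Op Tie t) \<le> expected_runtime n (dlb n) Op Tie"
proof -
  interpret proc n Op Tie by (rule assms)
  have "ennreal (\<Sum>t<T. pnd t) = (\<Sum>t<T. ennreal (pnd t))" by (simp add: pnd_nonneg)
  also have "\<dots> = (\<Sum>t<T. ennreal (measure_pmf.prob (PP t) {s. \<not> snd (snd s)}))" by (simp add: pnd_prob)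
  also have "\<dots> \<le> (\<Sum>t. ennreal (measure_pmf.prob (PP t) {s. \<not> snd (snd s)}))"
    by (rule sum_le_suminf) (auto intro: summableI)
  also have "\<dots> \<le> expected_runtime n (dlb n) Op Tie" unfolding expected_runtime_def by simp
  finally show ?thesis .
qed

theorem theorem9:
  shows "\<exists>c::real > 0. \<exists>N::nat. \<forall>n \<ge> N. even n \<longrightarrow>
    (\<forall>(Op :: real list \<Rightarrow> bool list \<Rightarrow> bool list pmf) (Tie :: real list \<Rightarrow> bool pmf).
       (\<forall>h. unary_unbiased n (Op h)) \<longrightarrow>
       ennreal (c * real n ^ 3) \<le> expected_runtime n (dlb n) Op Tie)"
proof (intro exI[of _ "1/4096"] conjI exI[of _ 4] allI impI)
  fix n :: nat and Op :: "real list \<Rightarrow> bool list \<Rightarrow> bool list pmf" and Tie :: "real list \<Rightarrow> bool pmf"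
  assume n4: "4 \<le> n" and ev: "even n" and unb: "\<forall>h. unary_unbiased n (Op h)"
  have P: "proc n Op" using ev unb by unfold_locales auto
  define M where "M = n div 4"
  have M1: "1 \<le> M" using n4 by (simp add: M_def)
  have MK: "M \<le> n div 2" unfolding M_def by simp
  have "2 * (n div 4) \<le> n div 2" by presburger
  hence KM: "real M \<le> real (n div 2) - real M" unfolding M_def by linarith
  have "n \<le> 8 * (n div 4)" using n4 by presburger
  hence nM: "real n \<le> 8 * real M" unfolding M_def by linarith
  have "1/4096 * real n ^ 3 \<le> 1/4096 * (8 * real M)^3"
    using nM by (intro mult_left_mono power_mono) auto
  also have "\<dots> = 1/8 * (real M)^2 * real M" by (simp add: power3_eq_cube power2_eq_square)
  also have "\<dots> \<le> 3/16 * (real M)^2 * (real (n div 2) - real M)"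
    using KM by (intro mult_mono) auto
  also have "\<dots> \<le> (\<Sum>t<n div 2 * M^2. proc.pnd n Op Tie t)" by (rule proc.main_bound[OF P M1 MK])
  finally have "ennreal (1/4096 * real n ^ 3) \<le> ennreal (\<Sum>t<n div 2 * M^2. proc.pnd n Op Tie t)"
    by (rule ennreal_leI)
  also have "\<dots> \<le> expected_runtime n (dlb n) Op Tie" by (rule runtime_ge[OF P])
  finally show "ennreal (1/4096 * real n ^ 3) \<le> expected_runtime n (dlb n) Op Tie" .
qed simp

end
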